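(* Let $J$ satisfy hypothesis (H) below, let $D\subset\mathbb{R}^N$ be a bounded set, $\Omega\subset D$ a bounded open set and $\Omega_n\subset D$ a sequence of bounded open sets with $|\Omega\setminus\Omega_n|+|\Omega_n\setminus\Omega|\to0$ as $n\to\infty$. Then, if $\tilde\mu(\Omega)$ is an eigenvalue of $\tilde{\mathcal{J}}_\Omega$, there exists a family of eigenvalues $\tilde\mu(\Omega_n)\in\sigma(\tilde{\mathcal{J}}_{\Omega_n})$ such that $\tilde\mu(\Omega_n)\to\tilde\mu(\Omega)$ as $n\to\infty$.
   Context: Hypothesis (H): $J\in\mathcal{C}(\mathbb{R}^N,\mathbb{R})$ is nonnegative, spherically symmetric and radially decreasing, with $J(0)>0$ and $\int_{\mathbb{R}^N}J=1$. For a bounded open $U\subset D$, $\tilde{\mathcal{J}}_U:L^2(D)\to L^2(D)$ is $\tilde{\mathcal{J}}_U u(x)=\int_U J(x-y)u(y)\,dy$ for $x\in U$ and $0$ for $x\in D\setminus U$. $|\cdot|$ is Lebesgue measure. *)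

theory Defs
  imports "HOL-Analysis.Analysis"
begin

text \<open>Elements of L2(D): Lebesgue measurable on D and square integrable on D
  (functions are identified when they agree a.e. on D; all statements below are
  invariant under such changes).\<close>
definition sq_int :: "'a::euclidean_space set \<Rightarrow> ('a \<Rightarrow> real) \<Rightarrow> bool" where
  "sq_int D u \<longleftrightarrow> set_borel_measurable lebesgue D u \<and>
     set_integrable lebesgue D (\<lambda>x. (u x)^2)"

definition Jop :: "('a::euclidean_space \<Rightarrow> real) \<Rightarrow> 'a set \<Rightarrow> ('a \<Rightarrow> real) \<Rightarrow> 'a \<Rightarrow> real" where
  "Jop J U u x = (if x \<in> U then (LINT y:U|lebesgue. J (x - y) * u y) else 0)"

definition is_eigenvalue ::
  "('a::euclidean_space \<Rightarrow> real) \<Rightarrow> 'a set \<Rightarrow> 'a set \<Rightarrow> real \<Rightarrow> bool" where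
  "is_eigenvalue J U D \<mu> \<longleftrightarrow>
     (\<exists>u. sq_int D u \<and> \<not> (AE x in lebesgue. x \<in> D \<longrightarrow> u x = 0) \<and>
          (AE x in lebesgue. x \<in> D \<longrightarrow> Jop J U u x = \<mu> * u x))"

text \<open>mu is in the spectrum of the bounded operator J_U on L2(D): J_U - mu I is not
  bijective on L2(D) (by the open mapping theorem, equivalent to having no bounded inverse).\<close>
definition in_spectrum ::
  "('a::euclidean_space \<Rightarrow> real) \<Rightarrow> 'a set \<Rightarrow> 'a set \<Rightarrow> real \<Rightarrow> bool" where
  "in_spectrum J U D \<mu> \<longleftrightarrow> \<not> (
     (\<forall>f. sq_int D f \<longrightarrow>
        (\<exists>u. sq_int D u \<and> (AE x in lebesgue. x \<in> D \<longrightarrow> Jop J U u x - \<mu> * u x = f x))) \<and>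
     (\<forall>u. sq_int D u \<and> (AE x in lebesgue. x \<in> D \<longrightarrow> Jop J U u x = \<mu> * u x) \<longrightarrow>
        (AE x in lebesgue. x \<in> D \<longrightarrow> u x = 0)))"

end

theory Submission
  imports Defs "HOL-Complex_Analysis.Great_Picard"
begin

lemma lebesgue_bounded_finite:
  assumes "bounded (A::'a::euclidean_space set)" "A \<in> sets lebesgue"
  shows "emeasure lebesgue A < \<infinity>"
  using bounded_set_imp_lmeasurable[OF assms] unfolding fmeasurable_def by blast

lemma sigma_finite_lebesgue: "sigma_finite_measure (lebesgue :: 'a::euclidean_space measure)"
proof
  show "\<exists>A. countable A \<and> A \<subseteq> sets (lebesgue::'a measure) \<and> \<Union> A = space lebesgue \<and>
       (\<forall>a\<in>A. emeasure lebesgue a \<noteq> \<infinity>)"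
  proof (intro exI[of _ "range (\<lambda>n::nat. cball (0::'a) (real n))"] conjI ballI)
    show "\<Union> (range (\<lambda>n::nat. cball (0::'a) (real n))) = space lebesgue"
      by (auto simp: real_arch_simple)
    fix a assume "a \<in> range (\<lambda>n::nat. cball (0::'a) (real n))"
    then show "emeasure lebesgue a \<noteq> \<infinity>"
      using lebesgue_bounded_finite[of a] by auto
  qed auto
qed

lemma abs_le_sq: "\<bar>a::real\<bar> \<le> 1 + a^2"
proof (cases "\<bar>a\<bar> \<le> 1")
  case True then show ?thesis using zero_le_power2[of a] by linarith
next
  case False
  have "\<bar>a\<bar> * 1 \<le> \<bar>a\<bar> * \<bar>a\<bar>" by (rule mult_left_mono) (use False in auto)
  moreover have "\<bar>a\<bar> * \<bar>a\<bar> = a^2" by (simp add: power2_eq_square)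
  ultimately show ?thesis by linarith
qed

lemma abs_mult_le_sq: "\<bar>a * b::real\<bar> \<le> a^2 + b^2"
proof -
  have "0 \<le> (\<bar>a\<bar> - \<bar>b\<bar>)^2" by simp
  also have "(\<bar>a\<bar> - \<bar>b\<bar>)^2 = a^2 + b^2 - 2 * \<bar>a * b\<bar>"
    by (simp add: power2_diff abs_mult)
  finally show ?thesis by linarith
qed

lemma add_sq_le: "((a::real) + b)^2 \<le> 2 * a^2 + 2 * b^2"
proof -
  have "0 \<le> (a - b)^2" by simp
  then show ?thesis by (simp add: power2_eq_square algebra_simps)
qed

definition Vsp :: "'a::euclidean_space set \<Rightarrow> ('a \<Rightarrow> real) \<Rightarrow> bool" where
  "Vsp D u \<longleftrightarrow> u \<in> borel_measurable lebesgue \<and> integrable lebesgue (\<lambda>x. (u x)^2) \<and> (\<forall>x. x \<notin> D \<longrightarrow> u x = 0)"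

definition ip :: "('a::euclidean_space \<Rightarrow> real) \<Rightarrow> ('a \<Rightarrow> real) \<Rightarrow> real" where
  "ip u v = (\<integral>x. u x * v x \<partial>lebesgue)"

abbreviation nrm :: "('a::euclidean_space \<Rightarrow> real) \<Rightarrow> real" where
  "nrm u \<equiv> ip u u"

locale dom =
  fixes D :: "'a::euclidean_space set"
  assumes D_bdd: "bounded D" and D_meas[measurable]: "D \<in> sets lebesgue"
begin

lemma D_fin: "emeasure lebesgue D < \<infinity>"
  using lebesgue_bounded_finite D_bdd D_meas by blast

lemma int_ind: "integrable lebesgue (indicator D :: 'a \<Rightarrow> real)"
  using D_fin by auto

lemma Vsp_meas: "Vsp D u \<Longrightarrow> u \<in> borel_measurable lebesgue"
  by (simp add: Vsp_def)

lemma Vsp_sq: "Vsp D u \<Longrightarrow> integrable lebesgue (\<lambda>x. (u x)^2)"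
  by (simp add: Vsp_def)

lemma Vsp_out: "Vsp D u \<Longrightarrow> x \<notin> D \<Longrightarrow> u x = 0"
  by (simp add: Vsp_def)

lemma Vsp_int: assumes "Vsp D u" shows "integrable lebesgue u"
proof -
  have fi: "integrable lebesgue (\<lambda>x. indicator D x + (u x)\<^sup>2 :: real)"
    using int_ind Vsp_sq[OF assms] by auto
  show ?thesis
  proof (rule Bochner_Integration.integrable_bound[OF fi])
  show "u \<in> borel_measurable lebesgue" using Vsp_meas[OF assms] .
  show "AE x in lebesgue. norm (u x) \<le> norm (indicator D x + (u x)\<^sup>2 :: real)"
  proof (rule AE_I2)
    fix x show "norm (u x) \<le> norm (indicator D x + (u x)\<^sup>2 :: real)"
    proof (cases "x \<in> D")
      case True
      have "\<bar>u x\<bar> \<le> 1 + (u x)^2" by (rule abs_le_sq)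
      then show ?thesis using True by simp
    next
      case False then show ?thesis using Vsp_out[OF assms] by simp
    qed
  qed
qed
qed

lemma Vsp_int_mult: assumes "Vsp D u" "Vsp D v" shows "integrable lebesgue (\<lambda>x. u x * v x)"
proof -
  have fi: "integrable lebesgue (\<lambda>x. (u x)\<^sup>2 + (v x)\<^sup>2)"
    using Vsp_sq[OF assms(1)] Vsp_sq[OF assms(2)] by auto
  show ?thesis
  proof (rule Bochner_Integration.integrable_bound[OF fi])
  show "(\<lambda>x. u x * v x) \<in> borel_measurable lebesgue"
    using Vsp_meas[OF assms(1)] Vsp_meas[OF assms(2)] by measurable
  show "AE x in lebesgue. norm (u x * v x) \<le> norm ((u x)\<^sup>2 + (v x)\<^sup>2)"
  proof (rule AE_I2)
    fix x
    have "\<bar>u x * v x\<bar> \<le> (u x)\<^sup>2 + (v x)\<^sup>2"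
      by (rule abs_mult_le_sq)
    then show "norm (u x * v x) \<le> norm ((u x)\<^sup>2 + (v x)\<^sup>2)" by simp
  qed
qed
qed

lemma Vsp_lin: assumes "Vsp D u" "Vsp D v" shows "Vsp D (\<lambda>x. a * u x + b * v x)"
  unfolding Vsp_def
proof (intro conjI)
  show "(\<lambda>x. a * u x + b * v x) \<in> borel_measurable lebesgue"
    using Vsp_meas[OF assms(1)] Vsp_meas[OF assms(2)] by measurable
  have "integrable lebesgue (\<lambda>x. a^2 * (u x)^2 + 2*a*b * (u x * v x) + b^2 * (v x)^2)"
    using Vsp_sq[OF assms(1)] Vsp_sq[OF assms(2)] Vsp_int_mult[OF assms] by auto
  then show "integrable lebesgue (\<lambda>x. (a * u x + b * v x)\<^sup>2)"
    by (simp add: power2_eq_square algebra_simps)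
  show "\<forall>x. x \<notin> D \<longrightarrow> a * u x + b * v x = 0"
    using Vsp_out[OF assms(1)] Vsp_out[OF assms(2)] by simp
qed

lemma Vsp_zero: "Vsp D (\<lambda>x. 0)"
  by (simp add: Vsp_def)

lemma Vsp_scale: assumes "Vsp D u" shows "Vsp D (\<lambda>x. a * u x)"
  using Vsp_lin[OF assms assms, of a 0] by simp

lemma Vsp_add: assumes "Vsp D u" "Vsp D v" shows "Vsp D (\<lambda>x. u x + v x)"
  using Vsp_lin[OF assms, of 1 1] by simp

lemma Vsp_diff: assumes "Vsp D u" "Vsp D v" shows "Vsp D (\<lambda>x. u x - v x)"
  using Vsp_lin[OF assms, of 1 "-1"] by simp

lemma Vsp_bounded:
  assumes "f \<in> borel_measurable lebesgue" "\<And>x. \<bar>f x\<bar> \<le> M" "\<And>x. x \<notin> D \<Longrightarrow> f x = 0"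
  shows "Vsp D f"
  unfolding Vsp_def
proof (intro conjI)
  have fi: "integrable lebesgue (\<lambda>x. M\<^sup>2 * indicator D x :: real)" using int_ind by auto
  show "integrable lebesgue (\<lambda>x. (f x)\<^sup>2)"
  proof (rule Bochner_Integration.integrable_bound[OF fi])
    show "(\<lambda>x. (f x)\<^sup>2) \<in> borel_measurable lebesgue" using assms(1) by measurable
    show "AE x in lebesgue. norm ((f x)\<^sup>2) \<le> norm (M\<^sup>2 * indicator D x :: real)"
    proof (rule AE_I2)
      fix x show "norm ((f x)\<^sup>2) \<le> norm (M\<^sup>2 * indicator D x :: real)"
      proof (cases "x \<in> D")
        case True
        have "(f x)^2 \<le> M^2" using assms(2)[of x]
          by (meson abs_ge_self dual_order.trans power2_mono)
        then show ?thesis using True by simp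
      next
        case False then show ?thesis using assms(3) by simp
      qed
    qed
  qed
qed (use assms(1,3) in auto)

lemma ip_sym: "ip u v = ip v u"
  unfolding ip_def by (simp add: mult.commute)

lemma ip_lin: assumes "Vsp D u" "Vsp D v" "Vsp D w"
  shows "ip (\<lambda>x. a * u x + b * v x) w = a * ip u w + b * ip v w"
proof -
  have "ip (\<lambda>x. a * u x + b * v x) w = (\<integral>x. a * (u x * w x) + b * (v x * w x) \<partial>lebesgue)"
    unfolding ip_def by (simp add: algebra_simps)
  also have "\<dots> = a * ip u w + b * ip v w"
    unfolding ip_def using Vsp_int_mult[OF assms(1,3)] Vsp_int_mult[OF assms(2,3)] by simp
  finally show ?thesis .
qed

lemma ip_lin2: assumes "Vsp D u" "Vsp D v" "Vsp D w"
  shows "ip w (\<lambda>x. a * u x + b * v x) = a * ip w u + b * ip w v"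
proof -
  have "ip w (\<lambda>x. a * u x + b * v x) = ip (\<lambda>x. a * u x + b * v x) w" by (rule ip_sym)
  also have "\<dots> = a * ip u w + b * ip v w" by (rule ip_lin[OF assms])
  also have "\<dots> = a * ip w u + b * ip w v" by (simp only: ip_sym[of u w] ip_sym[of v w])
  finally show ?thesis .
qed

lemma ip_scale: assumes "Vsp D u" "Vsp D w" shows "ip (\<lambda>x. a * u x) w = a * ip u w"
  using ip_lin[OF assms(1) assms(1) assms(2), of a 0] by simp

lemma ip_diff: assumes "Vsp D u" "Vsp D v" "Vsp D w"
  shows "ip (\<lambda>x. u x - v x) w = ip u w - ip v w"
  using ip_lin[OF assms, of 1 "-1"] by simp

lemma ip_add: assumes "Vsp D u" "Vsp D v" "Vsp D w"
  shows "ip (\<lambda>x. u x + v x) w = ip u w + ip v w"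
  using ip_lin[OF assms, of 1 1] by simp

lemma nrm_nonneg: "nrm u \<ge> 0"
  unfolding ip_def by (intro integral_nonneg_AE) auto

lemma ip_cong_AE: assumes "AE x in lebesgue. u x = u' x"
  and [measurable]: "u \<in> borel_measurable lebesgue" "u' \<in> borel_measurable lebesgue" "w \<in> borel_measurable lebesgue"
  shows "ip u w = ip u' w"
  unfolding ip_def using assms(1) by (intro integral_cong_AE) auto

end


context dom begin

lemma nrm_expand: assumes "Vsp D u" "Vsp D v"
  shows "nrm (\<lambda>x. u x - t * v x) = nrm u - 2 * t * ip u v + t^2 * nrm v"
proof -
  have sv: "Vsp D (\<lambda>x. t * v x)" using Vsp_scale[OF assms(2)] .
  have w: "Vsp D (\<lambda>x. u x - t * v x)" using Vsp_diff[OF assms(1) sv] .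
  have "nrm (\<lambda>x. u x - t * v x) = ip u (\<lambda>x. u x - t * v x) - ip (\<lambda>x. t * v x) (\<lambda>x. u x - t * v x)"
    by (rule ip_diff[OF assms(1) sv w])
  also have "ip u (\<lambda>x. u x - t * v x) = nrm u - t * ip u v"
    using ip_lin2[OF assms(1) assms(2) assms(1), of 1 "-t"] by simp
  also have "ip (\<lambda>x. t * v x) (\<lambda>x. u x - t * v x) = t * ip v (\<lambda>x. u x - t * v x)"
    by (rule ip_scale[OF assms(2) w])
  also have "ip v (\<lambda>x. u x - t * v x) = ip v u - t * nrm v"
    using ip_lin2[OF assms(1) assms(2) assms(2), of 1 "-t"] by simp
  finally show ?thesis using ip_sym[of v u] by (simp add: power2_eq_square algebra_simps)
qed

lemma CS: assumes "Vsp D u" "Vsp D v" shows "(ip u v)^2 \<le> nrm u * nrm v"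
proof -
  have q: "0 \<le> nrm u - 2 * t * ip u v + t^2 * nrm v" for t
    using nrm_expand[OF assms, of t] nrm_nonneg[of "\<lambda>x. u x - t * v x"] by simp
  show ?thesis
  proof (cases "nrm v = 0")
    case True
    have "ip u v = 0"
    proof (rule ccontr)
      assume ne: "ip u v \<noteq> 0"
      have "0 \<le> nrm u - 2 * ((nrm u + 1) / (2 * ip u v)) * ip u v"
        using q[of "(nrm u + 1) / (2 * ip u v)"] True by simp
      also have "\<dots> = -1" using ne by (simp add: field_simps)
      finally show False by simp
    qed
    then show ?thesis using True by simp
  next
    case False
    then have pos: "nrm v > 0" using nrm_nonneg[of v] by simp
    have "0 \<le> nrm u - 2 * (ip u v / nrm v) * ip u v + (ip u v / nrm v)^2 * nrm v"
      using q by blast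
    also have "\<dots> = nrm u - (ip u v)^2 / nrm v"
      using pos by (simp add: field_simps power2_eq_square)
    finally have "(ip u v)^2 / nrm v \<le> nrm u" by simp
    then show ?thesis using pos by (simp add: field_simps)
  qed
qed

lemma nrm_add_le: assumes "Vsp D u" "Vsp D v"
  shows "nrm (\<lambda>x. u x + v x) \<le> 2 * nrm u + 2 * nrm v"
proof -
  have "nrm (\<lambda>x. u x + v x) = nrm (\<lambda>x. u x - (-1) * v x)" by simp
  also have "\<dots> = nrm u + 2 * ip u v + nrm v" using nrm_expand[OF assms, of "-1"] by simp
  also have "\<dots> \<le> 2 * nrm u + 2 * nrm v"
  proof -
    have "nrm (\<lambda>x. u x - 1 * v x) \<ge> 0" by (rule nrm_nonneg)
    then have "0 \<le> nrm u - 2 * ip u v + nrm v" using nrm_expand[OF assms, of 1] by simp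
    then show ?thesis by simp
  qed
  finally show ?thesis .
qed

lemma nrm_diff_le: assumes "Vsp D u" "Vsp D v"
  shows "nrm (\<lambda>x. u x - v x) \<le> 2 * nrm u + 2 * nrm v"
proof -
  have "nrm (\<lambda>x. u x - v x) = nrm u - 2 * ip u v + nrm v" using nrm_expand[OF assms, of 1] by simp
  also have "\<dots> \<le> 2 * nrm u + 2 * nrm v"
  proof -
    have "0 \<le> nrm (\<lambda>x. u x - (-1) * v x)" by (rule nrm_nonneg)
    then have "0 \<le> nrm u + 2 * ip u v + nrm v" using nrm_expand[OF assms, of "-1"] by simp
    then show ?thesis by simp
  qed
  finally show ?thesis .
qed

lemma nrm_scale: assumes "Vsp D u" shows "nrm (\<lambda>x. a * u x) = a^2 * nrm u"
  unfolding ip_def by (simp add: power2_eq_square algebra_simps)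

lemma nrm_eq_0: assumes "Vsp D u" shows "nrm u = 0 \<longleftrightarrow> (AE x in lebesgue. u x = 0)"
proof -
  have "nrm u = (\<integral>x. (u x)^2 \<partial>lebesgue)" unfolding ip_def by (simp add: power2_eq_square)
  moreover have "(\<integral>x. (u x)^2 \<partial>lebesgue) = 0 \<longleftrightarrow> (AE x in lebesgue. (u x)^2 = 0)"
    by (rule integral_nonneg_eq_0_iff_AE) (use Vsp_sq[OF assms] in auto)
  ultimately show ?thesis by simp
qed

lemma Vsp_abs: assumes "Vsp D u" shows "Vsp D (\<lambda>x. \<bar>u x\<bar>)"
  using assms unfolding Vsp_def by (auto simp: power2_abs)

lemma Vsp_ind: "Vsp D (indicator D)"
  by (rule Vsp_bounded[of _ 1]) (auto simp: indicator_def)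

definition L1 :: "('a \<Rightarrow> real) \<Rightarrow> real" where "L1 u = (\<integral>x. \<bar>u x\<bar> \<partial>lebesgue)"

lemma L1_nonneg: "L1 u \<ge> 0" unfolding L1_def by (rule integral_nonneg_AE) auto

lemma L1_bound: assumes "Vsp D u" shows "(L1 u)^2 \<le> measure lebesgue D * nrm u"
proof -
  have "L1 u = ip (\<lambda>x. \<bar>u x\<bar>) (indicator D)"
    unfolding L1_def ip_def
    by (rule Bochner_Integration.integral_cong) (auto simp: indicator_def Vsp_out[OF assms])
  moreover have "nrm (indicator D :: 'a \<Rightarrow> real) = measure lebesgue D"
    unfolding ip_def by (simp add: indicator_def[symmetric] indicator_inter_arith[symmetric])
  moreover have "nrm (\<lambda>x. \<bar>u x\<bar>) = nrm u" unfolding ip_def by simp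
  ultimately show ?thesis using CS[OF Vsp_abs[OF assms] Vsp_ind] by (simp add: mult.commute)
qed

end

lemma borel_leb: "f \<in> borel_measurable borel \<Longrightarrow> f \<in> borel_measurable (lebesgue :: 'a::euclidean_space measure)"
  by (rule measurable_completion) simp

lemma id_leb: "(\<lambda>x::'a::euclidean_space. x) \<in> lebesgue \<rightarrow>\<^sub>M borel"
  by (rule measurable_completion) simp


locale kern = dom D for D :: "'a::euclidean_space set" +
  fixes J :: "'a \<Rightarrow> real" and U :: "'a set"
  assumes J_cont: "continuous_on UNIV J" and J_nonneg: "\<And>x. 0 \<le> J x" and J_le: "\<And>x. J x \<le> J 0"
    and J_sym: "\<And>x. J (- x) = J x" and U_open: "open U" and U_sub: "U \<subseteq> D"
begin

definition P :: "('a \<Rightarrow> real) \<Rightarrow> 'a \<Rightarrow> real" where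
  "P u x = (\<integral>y. indicator U y * (J (x - y) * u y) \<partial>lebesgue)"

definition T :: "('a \<Rightarrow> real) \<Rightarrow> 'a \<Rightarrow> real" where
  "T u x = indicator U x * P u x"

lemma Jop_eq: "Jop J U u x = T u x"
  by (simp add: Jop_def T_def P_def set_lebesgue_integral_def)

lemma U_bdd: "bounded U" using D_bdd U_sub bounded_subset by blast

lemma U_meas[measurable]: "U \<in> sets lebesgue"
  using lmeasurable_open[OF U_bdd U_open] by (simp add: fmeasurableD)

lemma J_borel[measurable]: "J \<in> borel_measurable borel"
  by (rule borel_measurable_continuous_onI[OF J_cont])

lemma J0_nonneg: "0 \<le> J 0" using J_nonneg .

lemma Jx_meas[measurable]: "(\<lambda>y. J (x - y)) \<in> borel_measurable lebesgue"
  by (rule borel_leb) measurable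

lemma kern_int: assumes "Vsp D u" shows "integrable lebesgue (\<lambda>y. indicator U y * (J (x - y) * u y))"
proof -
  have fi: "integrable lebesgue (\<lambda>y. J 0 * u y)" using Vsp_int[OF assms] by simp
  show ?thesis
  proof (rule Bochner_Integration.integrable_bound[OF fi])
    show "(\<lambda>y. indicator U y * (J (x - y) * u y)) \<in> borel_measurable lebesgue"
      using Vsp_meas[OF assms] by measurable
    show "AE y in lebesgue. norm (indicator U y * (J (x - y) * u y)) \<le> norm (J 0 * u y)"
    proof (rule AE_I2)
      fix y
      have "\<bar>J (x - y)\<bar> * \<bar>u y\<bar> \<le> \<bar>J 0\<bar> * \<bar>u y\<bar>"
        using J_le[of "x - y"] J_nonneg[of "x - y"] by (intro mult_right_mono) auto
      then show "norm (indicator U y * (J (x - y) * u y)) \<le> norm (J 0 * u y)"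
        by (auto simp: indicator_def abs_mult)
    qed
  qed
qed

lemma P_bound: assumes "Vsp D u" shows "\<bar>P u x\<bar> \<le> J 0 * L1 u"
proof -
  have "\<bar>P u x\<bar> \<le> (\<integral>y. norm (indicator U y * (J (x - y) * u y)) \<partial>lebesgue)"
    unfolding P_def using Bochner_Integration.integral_norm_bound[of lebesgue "\<lambda>y. indicator U y * (J (x - y) * u y)"]
    by simp
  also have "\<dots> \<le> (\<integral>y. J 0 * \<bar>u y\<bar> \<partial>lebesgue)"
  proof (rule integral_mono)
    show "integrable lebesgue (\<lambda>y. norm (indicator U y * (J (x - y) * u y)))"
      using kern_int[OF assms] by auto
    show "integrable lebesgue (\<lambda>y. J 0 * \<bar>u y\<bar>)" using Vsp_int[OF assms] by auto
    fix y
    have "\<bar>J (x - y)\<bar> * \<bar>u y\<bar> \<le> J 0 * \<bar>u y\<bar>"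
      using J_le[of "x - y"] J_nonneg[of "x - y"] by (intro mult_right_mono) auto
    then show "norm (indicator U y * (J (x - y) * u y)) \<le> J 0 * \<bar>u y\<bar>"
      using J0_nonneg by (auto simp: indicator_def abs_mult)
  qed
  also have "\<dots> = J 0 * L1 u" unfolding L1_def by simp
  finally show ?thesis .
qed

lemma P_diff_bound: assumes "Vsp D u" "0 \<le> e" and e: "\<And>y. y \<in> U \<Longrightarrow> \<bar>J (x - y) - J (x' - y)\<bar> \<le> e"
  shows "\<bar>P u x - P u x'\<bar> \<le> e * L1 u"
proof -
  have "P u x - P u x' = (\<integral>y. indicator U y * ((J (x - y) - J (x' - y)) * u y) \<partial>lebesgue)"
    unfolding P_def
    using kern_int[OF assms(1), of x] kern_int[OF assms(1), of x']
    by (subst Bochner_Integration.integral_diff[symmetric]) (auto simp: algebra_simps)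
  also have "\<bar>\<dots>\<bar> \<le> (\<integral>y. norm (indicator U y * ((J (x - y) - J (x' - y)) * u y)) \<partial>lebesgue)"
    using Bochner_Integration.integral_norm_bound[of lebesgue "\<lambda>y. indicator U y * ((J (x - y) - J (x' - y)) * u y)"]
    by simp
  also have "\<dots> \<le> (\<integral>y. e * \<bar>u y\<bar> \<partial>lebesgue)"
  proof (rule integral_mono)
    have "integrable lebesgue (\<lambda>y. indicator U y * (J (x - y) * u y) - indicator U y * (J (x' - y) * u y))"
      using kern_int[OF assms(1), of x] kern_int[OF assms(1), of x'] by auto
    then have "integrable lebesgue (\<lambda>y. indicator U y * ((J (x - y) - J (x' - y)) * u y))"
      by (simp add: algebra_simps)
    then show "integrable lebesgue (\<lambda>y. norm (indicator U y * ((J (x - y) - J (x' - y)) * u y)))"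
      by auto
    show "integrable lebesgue (\<lambda>y. e * \<bar>u y\<bar>)" using Vsp_int[OF assms(1)] by auto
    fix y
    show "norm (indicator U y * ((J (x - y) - J (x' - y)) * u y)) \<le> e * \<bar>u y\<bar>"
    proof (cases "y \<in> U")
      case True
      then show ?thesis using e[OF True] by (auto simp: abs_mult intro: mult_right_mono)
    next
      case False then show ?thesis using assms(2) by auto
    qed
  qed
  also have "\<dots> = e * L1 u" unfolding L1_def by simp
  finally show ?thesis .
qed

lemma J_equi: assumes "0 < e"
  shows "\<exists>d>0. \<forall>x'. dist x' x < d \<longrightarrow> (\<forall>y\<in>U. \<bar>J (x - y) - J (x' - y)\<bar> < e)"
proof -
  obtain R where R: "\<And>y. y \<in> D \<Longrightarrow> norm y \<le> R" using D_bdd bounded_iff by blast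
  define K where "K = cball (0::'a) (norm x + 1 + R)"
  have "uniformly_continuous_on K J"
    unfolding K_def by (rule compact_uniformly_continuous) (auto intro: continuous_on_subset[OF J_cont])
  then have "\<exists>d>0. \<forall>a\<in>K. \<forall>b\<in>K. dist b a < d \<longrightarrow> dist (J b) (J a) < e"
    using assms unfolding uniformly_continuous_on_def by blast
  then obtain d0 where d0: "d0 > 0" "\<And>a b. a \<in> K \<Longrightarrow> b \<in> K \<Longrightarrow> dist b a < d0 \<Longrightarrow> dist (J b) (J a) < e"
    by blast
  show ?thesis
  proof (intro exI[of _ "min d0 1"] conjI allI impI ballI)
    show "0 < min d0 1" using d0 by simp
    fix x' y assume x': "dist x' x < min d0 1" and y: "y \<in> U"
    have ny: "norm y \<le> R" using R y U_sub by auto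
    have a: "x - y \<in> K" unfolding K_def using ny norm_triangle_ineq4[of x y] by simp
    have "norm x' \<le> norm x + 1" using x' norm_triangle_ineq2[of x' x] by (simp add: dist_norm)
    then have b: "x' - y \<in> K" unfolding K_def using ny norm_triangle_ineq4[of x' y] by simp
    have "dist (x' - y) (x - y) < d0" using x' by (simp add: dist_norm)
    then have "dist (J (x' - y)) (J (x - y)) < e" using d0(2)[OF a b] by simp
    then show "\<bar>J (x - y) - J (x' - y)\<bar> < e" by (simp add: dist_real_def abs_minus_commute)
  qed
qed

lemma P_cont: assumes "Vsp D u" shows "continuous_on UNIV (P u)"
proof -
  have "isCont (P u) x" for x
  proof (rule continuous_at_sequentially[THEN iffD2], intro allI impI)
    fix s assume s: "s \<longlonglongrightarrow> x"
    show "(P u \<circ> s) \<longlonglongrightarrow> P u x"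
    proof (rule LIMSEQ_I)
      fix r :: real assume r: "0 < r"
      define e where "e = r / (2 * (L1 u + 1))"
      have e: "0 < e" unfolding e_def using r L1_nonneg[of u] by simp
      obtain d where d: "d > 0" "\<And>x'. dist x' x < d \<Longrightarrow> \<forall>y\<in>U. \<bar>J (x - y) - J (x' - y)\<bar> < e"
        using J_equi[OF e, of x] by blast
      obtain N where N: "\<And>n. n \<ge> N \<Longrightarrow> dist (s n) x < d"
        using s d(1) unfolding lim_sequentially by blast
      show "\<exists>N. \<forall>n\<ge>N. norm ((P u \<circ> s) n - P u x) < r"
      proof (intro exI allI impI)
        fix n assume "n \<ge> N"
        then have "\<forall>y\<in>U. \<bar>J (x - y) - J (s n - y)\<bar> < e" using d(2) N by blast
        then have "\<bar>P u x - P u (s n)\<bar> \<le> e * L1 u"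
          using P_diff_bound[OF assms, of e x "s n"] e by force
        also have "\<dots> < r"
        proof -
          have "e * L1 u \<le> e * (L1 u + 1)" using e by simp
          also have "\<dots> = r / 2" unfolding e_def using L1_nonneg[of u] by (simp add: field_simps)
          finally show ?thesis using r by simp
        qed
        finally show "norm ((P u \<circ> s) n - P u x) < r" by (simp add: abs_minus_commute)
      qed
    qed
  qed
  then show ?thesis by (simp add: continuous_on_eq_continuous_at)
qed

lemma P_meas[measurable]: assumes "Vsp D u" shows "P u \<in> borel_measurable lebesgue"
  by (rule borel_leb, rule borel_measurable_continuous_onI[OF P_cont[OF assms]])

lemma T_Vsp: assumes "Vsp D u" shows "Vsp D (T u)"
proof (rule Vsp_bounded[of _ "J 0 * L1 u"])
  show "T u \<in> borel_measurable lebesgue"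
    unfolding T_def using P_meas[OF assms] by measurable
  show "\<bar>T u x\<bar> \<le> J 0 * L1 u" for x
    unfolding T_def using P_bound[OF assms, of x] J0_nonneg L1_nonneg[of u]
    by (auto simp: indicator_def)
  show "x \<notin> D \<Longrightarrow> T u x = 0" for x unfolding T_def using U_sub by (auto simp: indicator_def)
qed

lemma T_bound: assumes "Vsp D u" shows "\<bar>T u x\<bar> \<le> J 0 * L1 u"
  unfolding T_def using P_bound[OF assms, of x] J0_nonneg L1_nonneg[of u]
  by (auto simp: indicator_def)

lemma P_lin: assumes "Vsp D u" "Vsp D v"
  shows "P (\<lambda>y. a * u y + b * v y) x = a * P u x + b * P v x"
proof -
  have "P (\<lambda>y. a * u y + b * v y) x =
     (\<integral>y. a * (indicator U y * (J (x - y) * u y)) + b * (indicator U y * (J (x - y) * v y)) \<partial>lebesgue)"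
    unfolding P_def by (simp add: algebra_simps)
  also have "\<dots> = a * P u x + b * P v x"
    unfolding P_def using kern_int[OF assms(1), of x] kern_int[OF assms(2), of x] by simp
  finally show ?thesis .
qed

lemma T_lin: assumes "Vsp D u" "Vsp D v"
  shows "T (\<lambda>y. a * u y + b * v y) = (\<lambda>x. a * T u x + b * T v x)"
  unfolding T_def by (auto simp: P_lin[OF assms] algebra_simps)

lemma T_diff: assumes "Vsp D u" "Vsp D v"
  shows "T (\<lambda>y. u y - v y) = (\<lambda>x. T u x - T v x)"
  using T_lin[OF assms, of 1 "-1"] by simp

lemma T_scale: assumes "Vsp D u" shows "T (\<lambda>y. a * u y) = (\<lambda>x. a * T u x)"
  using T_lin[OF assms assms, of a 0] by simp

lemma T_cong: assumes "AE x in lebesgue. u x = u' x"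
  "u \<in> borel_measurable lebesgue" "u' \<in> borel_measurable lebesgue"
  shows "T u = T u'"
proof -
  have "P u x = P u' x" for x
    unfolding P_def using assms by (intro integral_cong_AE) auto
  then show ?thesis unfolding T_def by auto
qed

end


context kern begin

lemma fst_b[measurable]: "(\<lambda>p. fst p) \<in> borel_measurable ((lebesgue::'a measure) \<Otimes>\<^sub>M lebesgue)"
  by (rule measurable_compose[OF measurable_fst id_leb])

lemma snd_b[measurable]: "(\<lambda>p. snd p) \<in> borel_measurable ((lebesgue::'a measure) \<Otimes>\<^sub>M lebesgue)"
  by (rule measurable_compose[OF measurable_snd id_leb])

lemma Jpair_meas[measurable]: "(\<lambda>p. J (fst p - snd p)) \<in> borel_measurable ((lebesgue::'a measure) \<Otimes>\<^sub>M lebesgue)"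
  by measurable

lemma J_swap: "J (x - y) = J (y - x)"
  using J_sym[of "y - x"] by simp

lemma T_sym: assumes u: "Vsp D u" and v: "Vsp D v" shows "ip (T u) v = ip u (T v)"
proof -
  interpret pl: pair_sigma_finite "lebesgue::'a measure" "lebesgue::'a measure"
    by (simp add: pair_sigma_finite_def sigma_finite_lebesgue)
  note [measurable] = Vsp_meas[OF u] Vsp_meas[OF v]
  define F where "F x y = indicator U x * v x * (indicator U y * (J (x - y) * u y))" for x y
  have 1: "ip (T u) v = (\<integral>x. (\<integral>y. F x y \<partial>lebesgue) \<partial>lebesgue)"
    unfolding ip_def
  proof (rule Bochner_Integration.integral_cong)
    fix x
    have "(\<integral>y. F x y \<partial>lebesgue) = (indicator U x * v x) * P u x"
      unfolding F_def P_def by (rule integral_mult_right_zero)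
    then show "T u x * v x = (\<integral>y. F x y \<partial>lebesgue)" unfolding T_def by simp
  qed simp
  have 2: "ip u (T v) = (\<integral>y. (\<integral>x. F x y \<partial>lebesgue) \<partial>lebesgue)"
    unfolding ip_def
  proof (rule Bochner_Integration.integral_cong)
    fix y
    have "(\<integral>x. F x y \<partial>lebesgue) = (\<integral>x. (u y * indicator U y) * (indicator U x * (J (y - x) * v x)) \<partial>lebesgue)"
      unfolding F_def by (rule Bochner_Integration.integral_cong) (simp_all add: J_swap[of _ y])
    also have "\<dots> = (u y * indicator U y) * P v y"
      unfolding P_def by (rule integral_mult_right_zero)
    finally show "u y * T v y = (\<integral>x. F x y \<partial>lebesgue)" unfolding T_def by simp
  qed simp
  have meas: "(\<lambda>(x, y). F x y) \<in> borel_measurable ((lebesgue::'a measure) \<Otimes>\<^sub>M lebesgue)"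
    unfolding F_def case_prod_beta by measurable
  have nF: "(\<integral>y. norm (F x y) \<partial>lebesgue) = indicator U x * \<bar>v x\<bar> * P (\<lambda>y. \<bar>u y\<bar>) x" for x
  proof -
    have "(\<integral>y. norm (F x y) \<partial>lebesgue) =
        (\<integral>y. (indicator U x * \<bar>v x\<bar>) * (indicator U y * (J (x - y) * \<bar>u y\<bar>)) \<partial>lebesgue)"
      unfolding F_def
      by (rule Bochner_Integration.integral_cong) (auto simp: abs_mult J_nonneg indicator_def)
    also have "\<dots> = indicator U x * \<bar>v x\<bar> * P (\<lambda>y. \<bar>u y\<bar>) x"
      unfolding P_def by simp
    finally show ?thesis .
  qed
  have int1: "integrable lebesgue (\<lambda>x. \<integral>y. norm (F x y) \<partial>lebesgue)"
  proof -
    have fi: "integrable lebesgue (\<lambda>x. (J 0 * L1 (\<lambda>y. \<bar>u y\<bar>)) * \<bar>v x\<bar>)"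
      using Vsp_int[OF v] by auto
    have pm: "P (\<lambda>y. \<bar>u y\<bar>) \<in> borel_measurable lebesgue" using P_meas[OF Vsp_abs[OF u]] .
    show ?thesis unfolding nF
    proof (rule Bochner_Integration.integrable_bound[OF fi])
      show "(\<lambda>x. indicator U x * \<bar>v x\<bar> * P (\<lambda>y. \<bar>u y\<bar>) x) \<in> borel_measurable lebesgue"
        using pm by measurable
      show "AE x in lebesgue. norm (indicator U x * \<bar>v x\<bar> * P (\<lambda>y. \<bar>u y\<bar>) x)
           \<le> norm (J 0 * L1 (\<lambda>y. \<bar>u y\<bar>) * \<bar>v x\<bar>)"
      proof (rule AE_I2)
        fix x
        have b: "\<bar>P (\<lambda>y. \<bar>u y\<bar>) x\<bar> \<le> J 0 * L1 (\<lambda>y. \<bar>u y\<bar>)" by (rule P_bound[OF Vsp_abs[OF u]])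
        have "\<bar>indicator U x * \<bar>v x\<bar> * P (\<lambda>y. \<bar>u y\<bar>) x\<bar> \<le> \<bar>v x\<bar> * (J 0 * L1 (\<lambda>y. \<bar>u y\<bar>))"
          using b by (auto simp: indicator_def abs_mult intro: mult_left_mono)
        then show "norm (indicator U x * \<bar>v x\<bar> * P (\<lambda>y. \<bar>u y\<bar>) x)
           \<le> norm (J 0 * L1 (\<lambda>y. \<bar>u y\<bar>) * \<bar>v x\<bar>)"
          using J0_nonneg L1_nonneg[of "\<lambda>y. \<bar>u y\<bar>"] by (simp add: abs_mult mult_ac)
      qed
    qed
  qed
  have int2: "AE x in lebesgue. integrable lebesgue (\<lambda>y. F x y)"
    unfolding F_def using kern_int[OF u] by auto
  have "integrable (lebesgue \<Otimes>\<^sub>M lebesgue) (\<lambda>(x, y). F x y)"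
    by (rule pl.Fubini_integrable) (use meas int1 int2 in auto)
  then have "(\<integral>y. (\<integral>x. F x y \<partial>lebesgue) \<partial>lebesgue) = (\<integral>x. (\<integral>y. F x y \<partial>lebesgue) \<partial>lebesgue)"
    by (rule pl.Fubini_integral)
  then show ?thesis using 1 2 by simp
qed

definition CT where "CT = (J 0)^2 * (measure lebesgue D)^2"

lemma CT_nonneg: "CT \<ge> 0" unfolding CT_def by simp

lemma T_nrm: assumes u: "Vsp D u" shows "nrm (T u) \<le> CT * nrm u"
proof -
  have "nrm (T u) = (\<integral>x. (T u x)^2 \<partial>lebesgue)" unfolding ip_def by (simp add: power2_eq_square)
  also have "\<dots> \<le> (\<integral>x. (J 0 * L1 u)^2 * indicator D x \<partial>lebesgue)"
  proof (rule integral_mono)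
    show "integrable lebesgue (\<lambda>x. (T u x)\<^sup>2)" using Vsp_sq[OF T_Vsp[OF u]] .
    show "integrable lebesgue (\<lambda>x. (J 0 * L1 u)\<^sup>2 * indicator D x :: real)" using int_ind by auto
    fix x
    show "(T u x)\<^sup>2 \<le> (J 0 * L1 u)\<^sup>2 * indicator D x"
    proof (cases "x \<in> D")
      case True
      have "(T u x)^2 = \<bar>T u x\<bar>^2" by simp
      also have "\<dots> \<le> (J 0 * L1 u)^2" by (rule power_mono[OF T_bound[OF u]]) simp
      finally show ?thesis using True by simp
    next
      case False then show ?thesis using Vsp_out[OF T_Vsp[OF u]] by simp
    qed
  qed
  also have "\<dots> = (J 0)^2 * (L1 u)^2 * measure lebesgue D"
    using D_meas by (simp add: power_mult_distrib)
  also have "\<dots> \<le> (J 0)^2 * (measure lebesgue D * nrm u) * measure lebesgue D"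
    by (intro mult_right_mono mult_left_mono L1_bound[OF u]) auto
  also have "\<dots> = CT * nrm u" unfolding CT_def by (simp add: power2_eq_square mult_ac)
  finally show ?thesis .
qed

end


context dom begin

lemma nrm_sup: assumes "Vsp D a" "\<And>x. x \<in> D \<Longrightarrow> \<bar>a x\<bar> \<le> e"
  shows "nrm a \<le> e^2 * measure lebesgue D"
proof -
  have "nrm a = (\<integral>x. (a x)^2 \<partial>lebesgue)" unfolding ip_def by (simp add: power2_eq_square)
  also have "\<dots> \<le> (\<integral>x. e^2 * indicator D x \<partial>lebesgue)"
  proof (rule integral_mono)
    show "integrable lebesgue (\<lambda>x. (a x)\<^sup>2)" using Vsp_sq[OF assms(1)] .
    show "integrable lebesgue (\<lambda>x. e\<^sup>2 * indicator D x :: real)" using int_ind by auto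
    fix x
    show "(a x)\<^sup>2 \<le> e\<^sup>2 * indicator D x"
    proof (cases "x \<in> D")
      case True
      have "(a x)^2 = \<bar>a x\<bar>^2" by simp
      also have "\<dots> \<le> e^2" by (rule power_mono[OF assms(2)[OF True]]) simp
      finally show ?thesis using True by simp
    next
      case False then show ?thesis using Vsp_out[OF assms(1)] by simp
    qed
  qed
  also have "\<dots> = e^2 * measure lebesgue D" using D_meas by simp
  finally show ?thesis .
qed

end

context kern begin

definition Sop :: "real \<Rightarrow> ('a \<Rightarrow> real) \<Rightarrow> 'a \<Rightarrow> real" where
  "Sop l w x = T w x - l * w x"

lemma Sop_Vsp: assumes "Vsp D w" shows "Vsp D (Sop l w)"
  unfolding Sop_def by (rule Vsp_diff[OF T_Vsp[OF assms] Vsp_scale[OF assms]])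

lemma Sop_lin: assumes "Vsp D u" "Vsp D v"
  shows "Sop l (\<lambda>y. a * u y + b * v y) = (\<lambda>x. a * Sop l u x + b * Sop l v x)"
  unfolding Sop_def T_lin[OF assms] by (auto simp: algebra_simps)

lemma Sop_scale: assumes "Vsp D u" shows "Sop l (\<lambda>y. a * u y) = (\<lambda>x. a * Sop l u x)"
  using Sop_lin[OF assms assms, where a=a and b=0] by simp

lemma Sop_diff: assumes "Vsp D u" "Vsp D v" shows "Sop l (\<lambda>y. u y - v y) = (\<lambda>x. Sop l u x - Sop l v x)"
  using Sop_lin[OF assms, where a=1 and b="-1"] by simp

lemma Sop_nrm: assumes "Vsp D u" shows "nrm (Sop l u) \<le> (2 * CT + 2 * l^2) * nrm u"
proof -
  have "nrm (Sop l u) \<le> 2 * nrm (T u) + 2 * nrm (\<lambda>x. l * u x)"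
    unfolding Sop_def by (rule nrm_diff_le[OF T_Vsp[OF assms] Vsp_scale[OF assms]])
  also have "\<dots> \<le> 2 * (CT * nrm u) + 2 * (l^2 * nrm u)"
    using T_nrm[OF assms] nrm_scale[OF assms, of l] by simp
  finally show ?thesis by (simp add: algebra_simps)
qed

lemma L1_le: assumes "Vsp D u" "nrm u = 1" shows "L1 u \<le> sqrt (measure lebesgue D)"
  using L1_bound[OF assms(1)] assms(2) by (simp add: real_le_rsqrt)

lemma lower_bound:
  assumes l: "l \<noteq> 0"
    and inj: "\<And>w. Vsp D w \<Longrightarrow> (AE x in lebesgue. T w x = l * w x) \<Longrightarrow> (AE x in lebesgue. w x = 0)"
  shows "\<exists>c>0. \<forall>w. Vsp D w \<longrightarrow> c * nrm w \<le> nrm (Sop l w)"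
proof (rule ccontr)
  assume "\<not> ?thesis"
  then have "\<forall>n::nat. \<exists>w. Vsp D w \<and> nrm (Sop l w) < (1 / real (Suc n)) * nrm w"
    by (metis not_le of_nat_0_less_iff zero_less_Suc zero_less_divide_1_iff)
  then obtain W where W: "\<And>n. Vsp D (W n)" "\<And>n. nrm (Sop l (W n)) < (1 / real (Suc n)) * nrm (W n)"
    by metis
  define a where "a n = 1 / sqrt (nrm (W n))" for n
  define w where "w n = (\<lambda>x. a n * W n x)" for n
  have Wpos: "nrm (W n) > 0" for n
  proof -
    have "nrm (W n) \<noteq> 0"
    proof
      assume "nrm (W n) = 0"
      then have "nrm (Sop l (W n)) < 0" using W(2)[of n] by simp
      then show False using nrm_nonneg[of "Sop l (W n)"] by linarith
    qed
    then show ?thesis using nrm_nonneg[of "W n"] by linarith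
  qed
  have wV: "Vsp D (w n)" for n unfolding w_def by (rule Vsp_scale[OF W(1)])
  have wn: "nrm (w n) = 1" for n
    unfolding w_def nrm_scale[OF W(1)] a_def using Wpos[of n] by (simp add: power_divide)
  have wS: "nrm (Sop l (w n)) < 1 / real (Suc n)" for n
  proof -
    have "nrm (Sop l (w n)) = (a n)^2 * nrm (Sop l (W n))"
      unfolding w_def Sop_scale[OF W(1)] nrm_scale[OF Sop_Vsp[OF W(1)]] ..
    also have "\<dots> < (a n)^2 * ((1 / real (Suc n)) * nrm (W n))"
      using W(2)[of n] Wpos[of n] unfolding a_def by (intro mult_strict_left_mono) auto
    also have "\<dots> = 1 / real (Suc n)" unfolding a_def using Wpos[of n] by (simp add: power_divide)
    finally show ?thesis .
  qed
  define Lb where "Lb = sqrt (measure lebesgue D)"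
  have Lb: "Lb \<ge> 0" unfolding Lb_def by simp
  have L1w: "L1 (w n) \<le> Lb" for n unfolding Lb_def by (rule L1_le[OF wV wn])
  define S where "S = closure D"
  have cS: "compact S" unfolding S_def using D_bdd compact_closure by blast
  obtain g k where g: "continuous_on S g" and k: "strict_mono (k :: nat \<Rightarrow> nat)"
    and gk: "\<And>e. 0 < e \<Longrightarrow> \<exists>N. \<forall>n x. n \<ge> N \<and> x \<in> S \<longrightarrow> norm (P (w (k n)) x - g x) < e"
  proof (rule Arzela_Ascoli[OF cS, of "\<lambda>n. P (w n)" "J 0 * Lb"])
    show "norm (P (w n) x) \<le> J 0 * Lb" for n x
      using P_bound[OF wV, of n x] L1w[of n] J0_nonneg by (simp add: order_trans mult_left_mono)
    fix x and e :: real assume "x \<in> S" "0 < e"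
    define e' where "e' = e / (Lb + 1)"
    have e': "0 < e'" unfolding e'_def using \<open>0 < e\<close> Lb by simp
    obtain d where d: "d > 0" "\<And>x'. dist x' x < d \<Longrightarrow> \<forall>y\<in>U. \<bar>J (x - y) - J (x' - y)\<bar> < e'"
      using J_equi[OF e', of x] by blast
    show "\<exists>d>0. \<forall>n y. y \<in> S \<and> norm (x - y) < d \<longrightarrow> norm (P (w n) x - P (w n) y) < e"
    proof (intro exI[of _ d] conjI allI impI)
      show "d > 0" by fact
      fix n y assume "y \<in> S \<and> norm (x - y) < d"
      then have "dist y x < d" by (simp add: dist_norm norm_minus_commute)
      then have "\<forall>z\<in>U. \<bar>J (x - z) - J (y - z)\<bar> \<le> e'" using d(2) by (meson less_imp_le)
      then have "\<bar>P (w n) x - P (w n) y\<bar> \<le> e' * L1 (w n)"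
        using P_diff_bound[OF wV, of e' x y] e' by auto
      also have "\<dots> \<le> e' * Lb" using L1w[of n] e' by (simp add: mult_left_mono)
      also have "\<dots> < e" unfolding e'_def using \<open>0 < e\<close> Lb by (simp add: field_simps)
      finally show "norm (P (w n) x - P (w n) y) < e" by simp
    qed
  qed blast
  have U_S: "U \<subseteq> S" using U_sub closure_subset unfolding S_def by blast
  have "bounded (g ` S)" using compact_imp_bounded[OF compact_continuous_image[OF g cS]] .
  then obtain B where B: "\<And>x. x \<in> S \<Longrightarrow> \<bar>g x\<bar> \<le> B" unfolding bounded_iff by auto
  define z where "z x = indicator U x * g x / l" for x
  have zV: "Vsp D z"
  proof (rule Vsp_bounded[of _ "\<bar>B\<bar> / \<bar>l\<bar>"])
    have "(\<lambda>x. indicator U x *\<^sub>R g x) \<in> borel_measurable borel"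
      by (rule borel_measurable_continuous_on_indicator) (use U_open continuous_on_subset[OF g U_S] in auto)
    then have "(\<lambda>x. indicator U x * g x) \<in> borel_measurable lebesgue" using borel_leb by simp
    then show "z \<in> borel_measurable lebesgue" unfolding z_def by measurable
    show "\<bar>z x\<bar> \<le> \<bar>B\<bar> / \<bar>l\<bar>" for x
    proof (cases "x \<in> U")
      case True
      then have "\<bar>g x\<bar> \<le> \<bar>B\<bar>" using B[of x] U_S by force
      then show ?thesis using True by (auto simp: z_def abs_mult abs_div intro: divide_right_mono)
    qed (auto simp: z_def)
    show "x \<notin> D \<Longrightarrow> z x = 0" for x using U_sub by (auto simp: z_def indicator_def)
  qed
  define m where "m = measure lebesgue D"
  have m: "m \<ge> 0" unfolding m_def by simp
  have est: "nrm (\<lambda>x. w (k n) x - z x) \<le> 2 * (e / \<bar>l\<bar>)^2 * m + 2 * (1 / l^2) * (1 / real (Suc (k n)))"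
    if e: "\<And>x. x \<in> S \<Longrightarrow> \<bar>P (w (k n)) x - g x\<bar> \<le> e" for n e
  proof -
    let ?w = "w (k n)"
    define A where "A x = (1 / l) * T ?w x - z x" for x
    define Bf where "Bf x = (1 / l) * Sop l ?w x" for x
    have AV: "Vsp D A" unfolding A_def by (rule Vsp_diff[OF Vsp_scale[OF T_Vsp[OF wV]] zV])
    have BV: "Vsp D Bf" unfolding Bf_def by (rule Vsp_scale[OF Sop_Vsp[OF wV]])
    have eq: "(\<lambda>x. ?w x - z x) = (\<lambda>x. A x - Bf x)"
      unfolding A_def Bf_def Sop_def using l by (auto simp: field_simps)
    have "nrm (\<lambda>x. ?w x - z x) \<le> 2 * nrm A + 2 * nrm Bf"
      unfolding eq by (rule nrm_diff_le[OF AV BV])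
    also have "nrm A \<le> (e / \<bar>l\<bar>)^2 * m"
      unfolding m_def
    proof (rule nrm_sup[OF AV])
      fix x assume "x \<in> D"
      show "\<bar>A x\<bar> \<le> e / \<bar>l\<bar>"
      proof (cases "x \<in> U")
        case True
        then have "A x = (P ?w x - g x) / l" unfolding A_def z_def T_def using l by (simp add: field_simps)
        moreover have "\<bar>P ?w x - g x\<bar> \<le> e" using e[of x] True U_S by blast
        ultimately show ?thesis using l by (simp add: abs_div divide_right_mono)
      next
        case False
        then have "A x = 0" unfolding A_def z_def T_def by simp
        moreover have "0 \<le> e" using e[of x] \<open>x \<in> D\<close> closure_subset[of D] unfolding S_def
          by (meson abs_ge_zero order_trans subsetD)
        ultimately show ?thesis by simp
      qed
    qed
    also have "nrm Bf = (1 / l)^2 * nrm (Sop l ?w)"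
      unfolding Bf_def by (rule nrm_scale[OF Sop_Vsp[OF wV]])
    also have "\<dots> \<le> (1 / l)^2 * (1 / real (Suc (k n)))"
      using wS[of "k n"] by (intro mult_left_mono) auto
    finally show ?thesis by (simp add: power_divide)
  qed
  have lim1: "(\<lambda>n. nrm (\<lambda>x. w (k n) x - z x)) \<longlonglongrightarrow> 0"
  proof (rule LIMSEQ_I)
    fix r :: real assume r: "0 < r"
    define e where "e = sqrt (r * l^2 / (8 * (m + 1)))"
    have e: "0 < e" unfolding e_def using r l m by simp
    have e2: "2 * (e / \<bar>l\<bar>)^2 * m < r / 2"
    proof -
      have "e^2 = r * l^2 / (8 * (m + 1))" unfolding e_def using r l m by simp
      then have "(e / \<bar>l\<bar>)^2 = r / (8 * (m + 1))" using l by (simp add: power_divide)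
      then have "2 * (e / \<bar>l\<bar>)^2 * m = 2 * (r / (8 * (m + 1))) * m" by simp
      also have "\<dots> = r * m / (4 * (m + 1))"
      proof -
        have "8 * m + 8 \<noteq> 0" "4 * m + 4 \<noteq> 0" using m by linarith+
        then show ?thesis by (simp add: field_simps)
      qed
      finally have "2 * (e / \<bar>l\<bar>)^2 * m = r * m / (4 * (m + 1))" .
      also have "\<dots> < r / 2"
      proof -
        show ?thesis using r m by (simp add: field_simps add_pos_nonneg mult_nonneg_nonneg)
      qed
      finally show ?thesis .
    qed
    obtain N1 where N1: "\<And>n x. n \<ge> N1 \<Longrightarrow> x \<in> S \<Longrightarrow> norm (P (w (k n)) x - g x) < e"
      using gk[OF e] by blast
    obtain N2 :: nat where N2: "4 / (l^2 * r) < real N2" using reals_Archimedean2 by blast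
    show "\<exists>N. \<forall>n\<ge>N. norm (nrm (\<lambda>x. w (k n) x - z x) - 0) < r"
    proof (intro exI[of _ "max N1 N2"] allI impI)
      fix n assume n: "max N1 N2 \<le> n"
      have "nrm (\<lambda>x. w (k n) x - z x) \<le> 2 * (e / \<bar>l\<bar>)^2 * m + 2 * (1 / l^2) * (1 / real (Suc (k n)))"
        by (rule est) (use N1 n less_imp_le in force)
      also have "2 * (1 / l^2) * (1 / real (Suc (k n))) < r / 2"
      proof -
        have "real N2 \<le> real (k n)" using n seq_suble[OF k, of n] by simp
        then have "4 / (l^2 * r) < real (Suc (k n))" using N2 by simp
        then have h4: "4 < real (Suc (k n)) * (l^2 * r)" using l r by (simp add: field_simps)
        have q: "0 < l^2 * real (Suc (k n))" using l by simp
        have "2 * (1 / l^2) * (1 / real (Suc (k n))) = 2 / (l^2 * real (Suc (k n)))" by simp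
        also have "\<dots> < r / 2"
        proof (subst pos_divide_less_eq[OF q])
          have "r / 2 * (l^2 * real (Suc (k n))) = (real (Suc (k n)) * (l^2 * r)) / 2" by simp
          then show "2 < r / 2 * (l^2 * real (Suc (k n)))" using h4 by linarith
        qed
        finally show ?thesis .
      qed
      finally show "norm (nrm (\<lambda>x. w (k n) x - z x) - 0) < r"
        using e2 nrm_nonneg[of "\<lambda>x. w (k n) x - z x"] by simp
    qed
  qed
  have lim2: "(\<lambda>n. 1 / real (Suc (k n))) \<longlonglongrightarrow> 0"
    using LIMSEQ_subseq_LIMSEQ[OF LIMSEQ_Suc[OF lim_inverse_n'] k]
    by (simp add: o_def)
  have zpos: "nrm z \<ge> 1 / 2"
  proof -
    have le: "1 \<le> 2 * nrm z + 2 * nrm (\<lambda>x. w (k n) x - z x)" for n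
    proof -
      have "nrm (w (k n)) = nrm (\<lambda>x. z x + (w (k n) x - z x))" by simp
      also have "\<dots> \<le> 2 * nrm z + 2 * nrm (\<lambda>x. w (k n) x - z x)"
        by (rule nrm_add_le[OF zV Vsp_diff[OF wV zV]])
      finally show ?thesis using wn by simp
    qed
    have "(\<lambda>n. 2 * nrm z + 2 * nrm (\<lambda>x. w (k n) x - z x)) \<longlonglongrightarrow> 2 * nrm z + 2 * 0"
      by (intro tendsto_intros lim1)
    then have "1 \<le> 2 * nrm z + 2 * 0"
      by (rule tendsto_lowerbound[OF _ always_eventually], intro allI le, simp)
    then show ?thesis by simp
  qed
  have "nrm (Sop l z) \<le> 0"
  proof -
    define C where "C = 2 * CT + 2 * l^2"
    have le: "nrm (Sop l z) \<le> 2 * (C * nrm (\<lambda>x. w (k n) x - z x)) + 2 * (1 / real (Suc (k n)))" for n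
    proof -
      have "Sop l z = (\<lambda>x. Sop l (\<lambda>y. z y - w (k n) y) x + Sop l (w (k n)) x)"
        using Sop_diff[OF zV wV, of l "k n"] by auto
      then have "nrm (Sop l z) \<le> 2 * nrm (Sop l (\<lambda>y. z y - w (k n) y)) + 2 * nrm (Sop l (w (k n)))"
        using nrm_add_le[OF Sop_Vsp[OF Vsp_diff[OF zV wV]] Sop_Vsp[OF wV]] by simp
      also have "nrm (Sop l (\<lambda>y. z y - w (k n) y)) \<le> C * nrm (\<lambda>y. z y - w (k n) y)"
        unfolding C_def by (rule Sop_nrm[OF Vsp_diff[OF zV wV]])
      also have "nrm (\<lambda>y. z y - w (k n) y) = nrm (\<lambda>x. w (k n) x - z x)"
        unfolding ip_def by (simp add: algebra_simps)
      also have "nrm (Sop l (w (k n))) \<le> 1 / real (Suc (k n))" using wS[of "k n"] by simp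
      finally show ?thesis by simp
    qed
    have "(\<lambda>n. 2 * (C * nrm (\<lambda>x. w (k n) x - z x)) + 2 * (1 / real (Suc (k n)))) \<longlonglongrightarrow> 2 * (C * 0) + 2 * 0"
      by (intro tendsto_intros lim1 lim2)
    then have "nrm (Sop l z) \<le> 2 * (C * 0) + 2 * 0"
      by (rule tendsto_lowerbound[OF _ always_eventually], intro allI le, simp)
    then show ?thesis by simp
  qed
  then have "nrm (Sop l z) = 0" using nrm_nonneg[of "Sop l z"] by linarith
  then have "AE x in lebesgue. Sop l z x = 0" using nrm_eq_0[OF Sop_Vsp[OF zV]] by simp
  then have "AE x in lebesgue. T z x = l * z x" by (auto simp: Sop_def)
  then have "AE x in lebesgue. z x = 0" using inj[OF zV] by simp
  then have "nrm z = 0" using nrm_eq_0[OF zV] by simp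
  then show False using zpos by simp
qed

end


context dom begin

lemma nrm_cong: assumes "AE x in lebesgue. u x = u' x" "Vsp D u" "Vsp D u'"
  shows "nrm u = nrm u'"
proof -
  have "nrm u = ip u' u" by (rule ip_cong_AE) (use assms Vsp_meas in auto)
  also have "\<dots> = ip u u'" by (rule ip_sym)
  also have "\<dots> = nrm u'" by (rule ip_cong_AE) (use assms Vsp_meas in auto)
  finally show ?thesis .
qed

lemma ip_cong2: assumes "AE x in lebesgue. u x = u' x" "Vsp D u" "Vsp D u'" "Vsp D w"
  shows "ip w u = ip w u'"
  using ip_cong_AE[OF assms(1) Vsp_meas[OF assms(2)] Vsp_meas[OF assms(3)] Vsp_meas[OF assms(4)]]
  by (simp add: ip_sym)

lemma ip_cong1: assumes "AE x in lebesgue. u x = u' x" "Vsp D u" "Vsp D u'" "Vsp D w"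
  shows "ip u w = ip u' w"
  using ip_cong_AE[OF assms(1) Vsp_meas[OF assms(2)] Vsp_meas[OF assms(3)] Vsp_meas[OF assms(4)]] .

end

context kern begin

definition inj_at :: "real \<Rightarrow> bool" where
  "inj_at t \<longleftrightarrow> (\<forall>w. Vsp D w \<longrightarrow> (AE x in lebesgue. T w x = t * w x) \<longrightarrow> (AE x in lebesgue. w x = 0))"

definition surj_at :: "real \<Rightarrow> bool" where
  "surj_at t \<longleftrightarrow> (\<forall>f. Vsp D f \<longrightarrow> (\<exists>w. Vsp D w \<and> (AE x in lebesgue. Sop t w x = f x)))"

definition R :: "real \<Rightarrow> ('a \<Rightarrow> real) \<Rightarrow> 'a \<Rightarrow> real" where
  "R t f = (SOME w. Vsp D w \<and> (AE x in lebesgue. Sop t w x = f x))"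

lemma R_prop: assumes "surj_at t" "Vsp D f"
  shows "Vsp D (R t f)" "AE x in lebesgue. Sop t (R t f) x = f x"
proof -
  have "\<exists>w. Vsp D w \<and> (AE x in lebesgue. Sop t w x = f x)" using assms unfolding surj_at_def by blast
  then have "Vsp D (R t f) \<and> (AE x in lebesgue. Sop t (R t f) x = f x)"
    unfolding R_def by (rule someI_ex)
  then show "Vsp D (R t f)" "AE x in lebesgue. Sop t (R t f) x = f x" by auto
qed

lemma R_unique: assumes "inj_at t" "Vsp D w" "Vsp D w'"
  "AE x in lebesgue. Sop t w x = Sop t w' x"
  shows "AE x in lebesgue. w x = w' x"
proof -
  have dV: "Vsp D (\<lambda>x. w x - w' x)" by (rule Vsp_diff[OF assms(2,3)])
  have "AE x in lebesgue. T (\<lambda>x. w x - w' x) x = t * (w x - w' x)"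
    using assms(4) unfolding T_diff[OF assms(2,3)] Sop_def by (auto simp: algebra_simps)
  then have "AE x in lebesgue. w x - w' x = 0" using assms(1) dV unfolding inj_at_def by blast
  then show ?thesis by auto
qed

lemma R_eq: assumes "inj_at t" "surj_at t" "Vsp D w" "Vsp D f" "AE x in lebesgue. Sop t w x = f x"
  shows "AE x in lebesgue. R t f x = w x"
proof (rule R_unique[OF assms(1) R_prop(1)[OF assms(2,4)] assms(3)])
  show "AE x in lebesgue. Sop t (R t f) x = Sop t w x"
    using R_prop(2)[OF assms(2,4)] assms(5) by eventually_elim simp
qed

lemma R_Sop: assumes "inj_at t" "surj_at t" "Vsp D w"
  shows "AE x in lebesgue. R t (Sop t w) x = w x"
  by (rule R_eq[OF assms(1,2,3) Sop_Vsp[OF assms(3)]]) simp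

lemma R_lin: assumes "inj_at t" "surj_at t" "Vsp D f" "Vsp D g"
  shows "AE x in lebesgue. R t (\<lambda>y. a * f y + b * g y) x = a * R t f x + b * R t g x"
proof (rule R_eq[OF assms(1,2)])
  note Rf = R_prop[OF assms(2,3)] and Rg = R_prop[OF assms(2,4)]
  show "Vsp D (\<lambda>x. a * R t f x + b * R t g x)" by (rule Vsp_lin[OF Rf(1) Rg(1)])
  show "Vsp D (\<lambda>y. a * f y + b * g y)" by (rule Vsp_lin[OF assms(3,4)])
  show "AE x in lebesgue. Sop t (\<lambda>x. a * R t f x + b * R t g x) x = a * f x + b * g x"
    unfolding Sop_lin[OF Rf(1) Rg(1)] using Rf(2) Rg(2) by auto
qed

lemma R_sym: assumes "inj_at t" "surj_at t" "Vsp D f" "Vsp D g"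
  shows "ip (R t f) g = ip f (R t g)"
proof -
  note Rf = R_prop[OF assms(2,3)] and Rg = R_prop[OF assms(2,4)]
  have "ip (R t f) g = ip (R t f) (Sop t (R t g))"
    by (rule ip_cong2) (use Rg Rf Sop_Vsp[OF Rg(1)] assms(4) in auto)
  also have "\<dots> = ip (R t f) (T (R t g)) - t * ip (R t f) (R t g)"
    unfolding Sop_def using ip_lin2[OF T_Vsp[OF Rg(1)] Rg(1) Rf(1), of 1 "-t"] by simp
  also have "\<dots> = ip (T (R t f)) (R t g) - t * ip (R t f) (R t g)"
    using T_sym[OF Rf(1) Rg(1)] by simp
  also have "\<dots> = ip (Sop t (R t f)) (R t g)"
    unfolding Sop_def using ip_lin[OF T_Vsp[OF Rf(1)] Rf(1) Rg(1), of 1 "-t"] by simp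
  also have "\<dots> = ip f (R t g)"
    by (rule ip_cong1) (use Rg Rf Sop_Vsp[OF Rf(1)] assms(3) in auto)
  finally show ?thesis .
qed

lemma R_bound: assumes "inj_at t" "surj_at t" "Vsp D f" "c > 0"
  and c: "\<And>w. Vsp D w \<Longrightarrow> c * nrm w \<le> nrm (Sop t w)"
  shows "nrm (R t f) \<le> nrm f / c"
proof -
  note Rf = R_prop[OF assms(2,3)]
  have "c * nrm (R t f) \<le> nrm (Sop t (R t f))" by (rule c[OF Rf(1)])
  also have "\<dots> = nrm f" by (rule nrm_cong[OF Rf(2) Sop_Vsp[OF Rf(1)] assms(3)])
  finally show ?thesis using assms(4) by (simp add: field_simps)
qed

end


lemma riccati:
  fixes g g' :: "real \<Rightarrow> real"
  assumes r: "r > 0" and nu: "\<nu> > 0"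
    and d: "\<And>t. \<bar>t - \<mu>\<bar> < r \<Longrightarrow> DERIV g t :> g' t"
    and q: "\<And>t. \<bar>t - \<mu>\<bar> < r \<Longrightarrow> (g t)^2 \<le> \<nu> * g' t"
  shows "\<bar>g \<mu>\<bar> \<le> \<nu> / r"
proof (rule ccontr)
  assume "\<not> ?thesis"
  then have gs: "\<nu> / r < \<bar>g \<mu>\<bar>" by simp
  define s where "s = g \<mu>"
  have s0: "s \<noteq> 0" using gs r nu unfolding s_def by (metis abs_zero divide_pos_pos not_less_iff_gr_or_eq)
  define t1 where "t1 = \<mu> + \<nu> / s"
  have "\<nu> / \<bar>s\<bar> < r" using gs r nu s0 unfolding s_def by (simp add: field_simps)
  then have t1r: "\<bar>t1 - \<mu>\<bar> < r" unfolding t1_def using nu by (simp add: abs_div)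
  have gp: "g' t \<ge> 0" if "\<bar>t - \<mu>\<bar> < r" for t
  proof -
    have "0 \<le> \<nu> * g' t" using q[OF that] by (meson order_trans zero_le_power2)
    then show ?thesis using nu by (simp add: zero_le_mult_iff)
  qed
  have mono: "g a \<le> g b" if "a \<le> b" "\<bar>a - \<mu>\<bar> < r" "\<bar>b - \<mu>\<bar> < r" for a b
  proof (rule DERIV_nonneg_imp_nondecreasing[OF that(1)])
    fix x assume "a \<le> x" "x \<le> b"
    then have "\<bar>x - \<mu>\<bar> < r" using that by linarith
    then show "\<exists>y. DERIV g x :> y \<and> 0 \<le> y" using d gp by blast
  qed
  define \<phi> where "\<phi> t = - \<nu> / g t - t" for t
  have dphi: "\<exists>y. DERIV \<phi> t :> y \<and> 0 \<le> y" if "\<bar>t - \<mu>\<bar> < r" "g t \<noteq> 0" for t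
  proof (intro exI conjI)
    show "DERIV \<phi> t :> \<nu> * g' t / (g t)^2 - 1"
      unfolding \<phi>_def using d[OF that(1)] that(2)
      by (auto intro!: derivative_eq_intros simp: field_simps power2_eq_square)
    have "(g t)^2 > 0" using that(2) by simp
    then show "0 \<le> \<nu> * g' t / (g t)^2 - 1" using q[OF that(1)] by (simp add: field_simps)
  qed
  show False
  proof (cases "s > 0")
    case True
    then have t1g: "\<mu> \<le> t1" unfolding t1_def using nu by simp
    have gpos: "g t \<ge> s" if "\<mu> \<le> t" "t \<le> t1" for t
      using mono[of \<mu> t] that t1r r unfolding s_def by simp
    have "\<phi> \<mu> \<le> \<phi> t1"
    proof (rule DERIV_nonneg_imp_nondecreasing[OF t1g])
      fix x assume "\<mu> \<le> x" "x \<le> t1"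
      then show "\<exists>y. DERIV \<phi> x :> y \<and> 0 \<le> y"
        using dphi[of x] gpos[of x] True t1r by force
    qed
    then have "0 \<le> - \<nu> / g t1" unfolding \<phi>_def t1_def s_def by simp
    moreover have "g t1 > 0" using gpos[of t1] t1g True by simp
    ultimately show False using nu divide_pos_pos[of \<nu> "g t1"] by linarith
  next
    case False
    then have sneg: "s < 0" using s0 by simp
    then have t1g: "t1 \<le> \<mu>" unfolding t1_def using nu by (simp add: divide_nonneg_neg)
    have gneg: "g t \<le> s" if "t1 \<le> t" "t \<le> \<mu>" for t
      using mono[of t \<mu>] that t1r r unfolding s_def by simp
    have "\<phi> t1 \<le> \<phi> \<mu>"
    proof (rule DERIV_nonneg_imp_nondecreasing[OF t1g])
      fix x assume "t1 \<le> x" "x \<le> \<mu>"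
      then show "\<exists>y. DERIV \<phi> x :> y \<and> 0 \<le> y"
        using dphi[of x] gneg[of x] sneg t1r by force
    qed
    then have "- \<nu> / g t1 \<le> 0" unfolding \<phi>_def t1_def s_def by simp
    moreover have "g t1 < 0" using gneg[of t1] t1g sneg by simp
    ultimately show False using nu divide_pos_neg[of \<nu> "g t1"] by linarith
  qed
qed



context kern begin

lemma local_lb: assumes c0: "c0 > 0" and lb: "\<And>w. Vsp D w \<Longrightarrow> c0 * nrm w \<le> nrm (Sop t0 w)"
  and tt: "(t - t0)^2 \<le> c0 / 4" and w: "Vsp D w"
  shows "(c0 / 4) * nrm w \<le> nrm (Sop t w)"
proof -
  have eq: "Sop t0 w = (\<lambda>x. Sop t w x + (t - t0) * w x)"
    unfolding Sop_def by (auto simp: algebra_simps)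
  have "c0 * nrm w \<le> nrm (Sop t0 w)" by (rule lb[OF w])
  also have "\<dots> \<le> 2 * nrm (Sop t w) + 2 * nrm (\<lambda>x. (t - t0) * w x)"
    unfolding eq by (rule nrm_add_le[OF Sop_Vsp[OF w] Vsp_scale[OF w]])
  also have "nrm (\<lambda>x. (t - t0) * w x) = (t - t0)^2 * nrm w" by (rule nrm_scale[OF w])
  also have "(t - t0)^2 * nrm w \<le> (c0 / 4) * nrm w"
    by (rule mult_right_mono[OF tt nrm_nonneg])
  finally show ?thesis by simp
qed

lemma resolv: assumes "inj_at t" "surj_at t" "inj_at t0" "surj_at t0" "Vsp D v"
  shows "AE x in lebesgue. R t v x = R t0 v x + (t - t0) * R t (R t0 v) x"
proof -
  note a = R_prop[OF assms(4,5)]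
  note b = R_prop[OF assms(2) a(1)]
  have wV: "Vsp D (\<lambda>x. 1 * R t0 v x + (t - t0) * R t (R t0 v) x)" by (rule Vsp_lin[OF a(1) b(1)])
  have "AE x in lebesgue. R t v x = 1 * R t0 v x + (t - t0) * R t (R t0 v) x"
  proof (rule R_eq[OF assms(1,2) wV assms(5)])
    have eqS: "Sop t (\<lambda>x. 1 * R t0 v x + (t - t0) * R t (R t0 v) x) =
       (\<lambda>x. 1 * Sop t (R t0 v) x + (t - t0) * Sop t (R t (R t0 v)) x)"
      by (rule Sop_lin[OF a(1) b(1)])
    have eqS2: "\<And>x. Sop t (R t0 v) x = Sop t0 (R t0 v) x - (t - t0) * R t0 v x"
      unfolding Sop_def by (simp add: algebra_simps)
    show "AE x in lebesgue. Sop t (\<lambda>x. 1 * R t0 v x + (t - t0) * R t (R t0 v) x) x = v x"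
      unfolding eqS using a(2) b(2) by eventually_elim (simp add: eqS2 algebra_simps)
  qed
  then show ?thesis by simp
qed

lemma deriv_R:
  assumes bij: "\<And>t. \<bar>t - \<mu>\<bar> < r \<Longrightarrow> inj_at t \<and> surj_at t"
    and lb: "\<And>t. \<bar>t - \<mu>\<bar> < r \<Longrightarrow> \<exists>c>0. \<forall>w. Vsp D w \<longrightarrow> c * nrm w \<le> nrm (Sop t w)"
    and t0: "\<bar>t0 - \<mu>\<bar> < r" and x: "Vsp D x"
  shows "DERIV (\<lambda>t. ip (R t x) x) t0 :> nrm (R t0 x)"
proof -
  obtain c0 where c0: "c0 > 0" "\<And>w. Vsp D w \<Longrightarrow> c0 * nrm w \<le> nrm (Sop t0 w)" using lb[OF t0] by blast
  note b0 = bij[OF t0]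
  define a where "a = R t0 x"
  have aV: "Vsp D a" unfolding a_def using R_prop(1)[OF conjunct2[OF b0] x] .
  define \<rho> where "\<rho> = min (r - \<bar>t0 - \<mu>\<bar>) (sqrt (c0 / 4))"
  have \<rho>: "\<rho> > 0" unfolding \<rho>_def using t0 c0 by simp
  define K where "K = 2 * nrm a / sqrt c0"
  have K: "K \<ge> 0" unfolding K_def using nrm_nonneg[of a] c0 by simp
  have near: "\<bar>t - \<mu>\<bar> < r" "(t - t0)^2 \<le> c0 / 4" if "\<bar>t - t0\<bar> < \<rho>" for t
  proof -
    show "\<bar>t - \<mu>\<bar> < r" using that unfolding \<rho>_def by linarith
    have "\<bar>t - t0\<bar> < sqrt (c0 / 4)" using that unfolding \<rho>_def by linarith
    then have "\<bar>t - t0\<bar>^2 \<le> (sqrt (c0 / 4))^2" by (intro power_mono) auto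
    then show "(t - t0)^2 \<le> c0 / 4" using c0 by simp
  qed
  have key: "(ip (R t x) x - ip (R t0 x) x) = (t - t0) * ip a (R t x) \<and> \<bar>ip a (R t x) - nrm a\<bar> \<le> K * \<bar>t - t0\<bar>"
    if tt: "\<bar>t - t0\<bar> < \<rho>" for t
  proof -
    note bt = bij[OF near(1)[OF tt]]
    have lbt: "\<And>w. Vsp D w \<Longrightarrow> (c0 / 4) * nrm w \<le> nrm (Sop t w)"
      using local_lb[OF c0 near(2)[OF tt]] by blast
    note Rtx = R_prop[OF conjunct2[OF bt] x]
    note Rta = R_prop[OF conjunct2[OF bt] aV]
    have res: "AE z in lebesgue. R t x z = a z + (t - t0) * R t a z"
      unfolding a_def by (rule resolv[OF conjunct1[OF bt] conjunct2[OF bt] conjunct1[OF b0] conjunct2[OF b0] x])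
    have V2: "Vsp D (\<lambda>z. 1 * a z + (t - t0) * R t a z)" by (rule Vsp_lin[OF aV Rta(1)])
    have "ip (R t x) x = ip (\<lambda>z. 1 * a z + (t - t0) * R t a z) x"
      by (rule ip_cong1[OF _ Rtx(1) V2 x]) (use res in simp)
    also have "\<dots> = ip a x + (t - t0) * ip (R t a) x"
      using ip_lin[OF aV Rta(1) x, of 1 "t - t0"] by simp
    also have "ip (R t a) x = ip a (R t x)" by (rule R_sym[OF conjunct1[OF bt] conjunct2[OF bt] aV x])
    finally have e1: "ip (R t x) x - ip (R t0 x) x = (t - t0) * ip a (R t x)" unfolding a_def by simp
    have dV: "Vsp D (\<lambda>z. R t x z - a z)" by (rule Vsp_diff[OF Rtx(1) aV])
    have sV: "Vsp D (\<lambda>z. (t - t0) * R t a z)" by (rule Vsp_scale[OF Rta(1)])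
    have "nrm (\<lambda>z. R t x z - a z) = nrm (\<lambda>z. (t - t0) * R t a z)"
      by (rule nrm_cong[OF _ dV sV]) (use res in auto)
    also have "\<dots> = (t - t0)^2 * nrm (R t a)" by (rule nrm_scale[OF Rta(1)])
    also have "\<dots> \<le> (t - t0)^2 * (nrm a / (c0 / 4))"
      by (intro mult_left_mono R_bound[OF conjunct1[OF bt] conjunct2[OF bt] aV]) (use c0 lbt in auto)
    finally have nd: "nrm (\<lambda>z. R t x z - a z) \<le> (t - t0)^2 * (nrm a / (c0 / 4))" .
    have "ip a (R t x) - nrm a = ip a (\<lambda>z. R t x z - a z)"
      using ip_lin2[OF Rtx(1) aV aV, of 1 "-1"] by simp
    then have "(ip a (R t x) - nrm a)^2 \<le> nrm a * nrm (\<lambda>z. R t x z - a z)"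
      using CS[OF aV dV] by simp
    also have "\<dots> \<le> nrm a * ((t - t0)^2 * (nrm a / (c0 / 4)))"
      by (rule mult_left_mono[OF nd nrm_nonneg])
    also have "\<dots> = (K * \<bar>t - t0\<bar>)^2"
      unfolding K_def using c0 by (simp add: power_mult_distrib power_divide field_simps power2_eq_square)
    finally have "\<bar>ip a (R t x) - nrm a\<bar>^2 \<le> (K * \<bar>t - t0\<bar>)^2" by simp
    then have "\<bar>ip a (R t x) - nrm a\<bar> \<le> K * \<bar>t - t0\<bar>"
      by (rule power2_le_imp_le) (use K in simp)
    with e1 show ?thesis by simp
  qed
  have ev: "eventually (\<lambda>t. \<bar>t - t0\<bar> < \<rho> \<and> t \<noteq> t0) (at t0)"
    unfolding eventually_at using \<rho> by (auto simp: dist_real_def intro!: exI[of _ \<rho>])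
  have lim0: "((\<lambda>t. ip a (R t x) - nrm a) \<longlongrightarrow> 0) (at t0)"
  proof (rule Lim_null_comparison[where g = "\<lambda>t. K * \<bar>t - t0\<bar>"])
    show "eventually (\<lambda>t. norm (ip a (R t x) - nrm a) \<le> K * \<bar>t - t0\<bar>) (at t0)"
      using ev by eventually_elim (use key in auto)
    have "((\<lambda>t. K * \<bar>t - t0\<bar>) \<longlongrightarrow> K * \<bar>t0 - t0\<bar>) (at t0)"
      by (intro tendsto_intros)
    then show "((\<lambda>t. K * \<bar>t - t0\<bar>) \<longlongrightarrow> 0) (at t0)" by simp
  qed
  then have lim1: "((\<lambda>t. ip a (R t x)) \<longlongrightarrow> nrm a) (at t0)"
    using LIM_zero_iff by blast
  have "((\<lambda>t. (ip (R t x) x - ip (R t0 x) x) / (t - t0)) \<longlongrightarrow> nrm a) (at t0)"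
  proof (rule Lim_transform_eventually[OF lim1])
    show "eventually (\<lambda>t. ip a (R t x) = (ip (R t x) x - ip (R t0 x) x) / (t - t0)) (at t0)"
      using ev by eventually_elim (use key in auto)
  qed
  then show ?thesis unfolding has_field_derivative_iff a_def .
qed

lemma polar: assumes "inj_at t" "surj_at t" "r > 0"
  and Q: "\<And>y. Vsp D y \<Longrightarrow> \<bar>ip (R t y) y\<bar> \<le> nrm y / r" and f: "Vsp D f"
  shows "nrm (R t f) \<le> nrm f / r^2"
proof -
  note Rf = R_prop[OF assms(2) f]
  define y where "y z = r * R t f z" for z
  have yV: "Vsp D y" unfolding y_def by (rule Vsp_scale[OF Rf(1)])
  note Ry = R_prop[OF assms(2) yV]
  define N where "N = nrm (R t f)"
  have ny: "nrm y = r^2 * N" unfolding y_def N_def by (rule nrm_scale[OF Rf(1)])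
  have ipy: "ip (R t f) y = r * N" unfolding y_def N_def
    using ip_lin2[OF Rf(1) Rf(1) Rf(1), of r 0] by simp
  have sym: "ip (R t y) f = ip (R t f) y"
    using R_sym[OF assms(1,2) yV f] ip_sym by metis
  have q: "ip (R t (\<lambda>z. f z + s * y z)) (\<lambda>z. f z + s * y z)
         = ip (R t f) f + 2 * s * ip (R t f) y + s^2 * ip (R t y) y" if s: "s = 1 \<or> s = -1" for s
  proof -
    have sV: "Vsp D (\<lambda>z. f z + s * y z)" using Vsp_lin[OF f yV, of 1 s] by simp
    have lV: "Vsp D (\<lambda>z. 1 * R t f z + s * R t y z)" by (rule Vsp_lin[OF Rf(1) Ry(1)])
    have "ip (R t (\<lambda>z. f z + s * y z)) (\<lambda>z. f z + s * y z)
        = ip (\<lambda>z. 1 * R t f z + s * R t y z) (\<lambda>z. f z + s * y z)"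
    proof (rule ip_cong1[OF _ R_prop(1)[OF assms(2) sV] lV sV])
      show "AE x in lebesgue. R t (\<lambda>z. f z + s * y z) x = 1 * R t f x + s * R t y x"
        using R_lin[OF assms(1,2) f yV, of 1 s] by simp
    qed
    also have "\<dots> = ip (R t f) (\<lambda>z. f z + s * y z) + s * ip (R t y) (\<lambda>z. f z + s * y z)"
      using ip_lin[OF Rf(1) Ry(1) sV, of 1 s] by simp
    also have "ip (R t f) (\<lambda>z. f z + s * y z) = ip (R t f) f + s * ip (R t f) y"
      using ip_lin2[OF f yV Rf(1), of 1 s] by simp
    also have "ip (R t y) (\<lambda>z. f z + s * y z) = ip (R t y) f + s * ip (R t y) y"
      using ip_lin2[OF f yV Ry(1), of 1 s] by simp
    finally show ?thesis using sym s by (auto simp: algebra_simps power2_eq_square)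
  qed
  have p1: "nrm (\<lambda>z. f z + 1 * y z) = nrm f + 2 * ip f y + nrm y"
    using nrm_expand[OF f yV, of "-1"] by simp
  have p2: "nrm (\<lambda>z. f z + (-1) * y z) = nrm f - 2 * ip f y + nrm y"
    using nrm_expand[OF f yV, of 1] by simp
  have s1: "Vsp D (\<lambda>z. f z + 1 * y z)" using Vsp_lin[OF f yV, of 1 1] by simp
  have s2: "Vsp D (\<lambda>z. f z + (-1) * y z)" using Vsp_lin[OF f yV, of 1 "-1"] by simp
  have "4 * (r * N) = ip (R t (\<lambda>z. f z + 1 * y z)) (\<lambda>z. f z + 1 * y z)
         - ip (R t (\<lambda>z. f z + (-1) * y z)) (\<lambda>z. f z + (-1) * y z)"
    using q[of 1] q[of "-1"] ipy by simp
  also have "\<dots> \<le> nrm (\<lambda>z. f z + 1 * y z) / r + nrm (\<lambda>z. f z + (-1) * y z) / r"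
    using Q[OF s1] Q[OF s2] by linarith
  also have "\<dots> = (2 * nrm f + 2 * (r^2 * N)) / r" using p1 p2 ny by (simp add: add_divide_distrib[symmetric])
  finally have "4 * (r * N) * r \<le> 2 * nrm f + 2 * (r^2 * N)" using assms(3) by (simp add: field_simps)
  then have "2 * (r^2 * N) \<le> 2 * nrm f" by (simp add: power2_eq_square algebra_simps)
  then have "r^2 * N \<le> nrm f" by simp
  then show ?thesis unfolding N_def using assms(3) by (simp add: field_simps)
qed

lemma core:
  assumes r: "r > 0" and bij: "\<And>t. \<bar>t - \<mu>\<bar> < r \<Longrightarrow> inj_at t \<and> surj_at t"
    and nz: "\<And>t. \<bar>t - \<mu>\<bar> < r \<Longrightarrow> t \<noteq> 0" and v: "Vsp D v"
  shows "r^2 * nrm v \<le> nrm (Sop \<mu> v)"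
proof -
  have lb: "\<exists>c>0. \<forall>w. Vsp D w \<longrightarrow> c * nrm w \<le> nrm (Sop t w)" if "\<bar>t - \<mu>\<bar> < r" for t
    by (rule lower_bound[OF nz[OF that]]) (use bij[OF that] in \<open>auto simp: inj_at_def\<close>)
  have m0: "\<bar>\<mu> - \<mu>\<bar> < r" using r by simp
  note bm = bij[OF m0]
  have Q: "\<bar>ip (R \<mu> y) y\<bar> \<le> nrm y / r" if y: "Vsp D y" for y
  proof (cases "nrm y = 0")
    case True
    have "(ip (R \<mu> y) y)^2 \<le> nrm (R \<mu> y) * nrm y"
      by (rule CS[OF R_prop(1)[OF conjunct2[OF bm] y] y])
    then have "ip (R \<mu> y) y = 0" using True by simp
    then show ?thesis using True by simp
  next
    case False
    then have nu: "nrm y > 0" using nrm_nonneg[of y] by linarith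
    show ?thesis
    proof (rule riccati[OF r nu, of \<mu> "\<lambda>t. ip (R t y) y" "\<lambda>t. nrm (R t y)"])
      fix t assume t: "\<bar>t - \<mu>\<bar> < r"
      show "DERIV (\<lambda>t. ip (R t y) y) t :> nrm (R t y)"
        by (rule deriv_R[OF bij lb t y])
      have "(ip (R t y) y)^2 \<le> nrm (R t y) * nrm y"
        by (rule CS[OF R_prop(1)[OF conjunct2[OF bij[OF t]] y] y])
      then show "(ip (R t y) y)^2 \<le> nrm y * nrm (R t y)" by (simp add: mult.commute)
    qed
  qed
  have "nrm (R \<mu> (Sop \<mu> v)) \<le> nrm (Sop \<mu> v) / r^2"
    by (rule polar[OF conjunct1[OF bm] conjunct2[OF bm] r Q Sop_Vsp[OF v]])
  moreover have "nrm (R \<mu> (Sop \<mu> v)) = nrm v"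
    by (rule nrm_cong[OF R_Sop[OF conjunct1[OF bm] conjunct2[OF bm] v]
          R_prop(1)[OF conjunct2[OF bm] Sop_Vsp[OF v]] v])
  ultimately show ?thesis using r by (simp add: field_simps)
qed

end


context dom begin

lemma sq_int_Vsp: assumes "sq_int D u" shows "Vsp D (\<lambda>x. indicator D x * u x)"
proof -
  have m: "(\<lambda>x. indicator D x * u x) \<in> borel_measurable lebesgue"
    using assms unfolding sq_int_def set_borel_measurable_def by simp
  have i: "integrable lebesgue (\<lambda>x. indicator D x * (u x)^2)"
    using assms unfolding sq_int_def set_integrable_def by simp
  have "(\<lambda>x. (indicator D x * u x)^2) = (\<lambda>x. indicator D x * (u x)^2)"
    by (auto simp: indicator_def)
  then show ?thesis unfolding Vsp_def using m i by (auto simp: indicator_def)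
qed

lemma Vsp_sq_int: assumes "Vsp D f" shows "sq_int D f"
proof -
  have e1: "(\<lambda>x. indicator D x *\<^sub>R f x) = f"
  proof
    fix x show "indicator D x *\<^sub>R f x = f x" by (cases "x \<in> D") (auto simp: Vsp_out[OF assms])
  qed
  have e2: "(\<lambda>x. indicator D x *\<^sub>R (f x)^2) = (\<lambda>x. (f x)^2)"
  proof
    fix x show "indicator D x *\<^sub>R (f x)^2 = (f x)^2" by (cases "x \<in> D") (auto simp: Vsp_out[OF assms])
  qed
  show ?thesis unfolding sq_int_def set_borel_measurable_def set_integrable_def e1 e2
    using Vsp_meas[OF assms] Vsp_sq[OF assms] by simp
qed

end

context kern begin

lemma T_ind: "T (\<lambda>x. indicator D x * u x) = T u"
proof -
  have "P (\<lambda>x. indicator D x * u x) x = P u x" for x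
    unfolding P_def using U_sub by (intro Bochner_Integration.integral_cong) (auto simp: indicator_def)
  then show ?thesis unfolding T_def by auto
qed

lemma not_spec: assumes "\<not> in_spectrum J U D t" shows "inj_at t" "surj_at t"
proof -
  have A: "\<And>f. sq_int D f \<Longrightarrow> \<exists>u. sq_int D u \<and> (AE x in lebesgue. x \<in> D \<longrightarrow> Jop J U u x - t * u x = f x)"
    and B: "\<And>u. sq_int D u \<Longrightarrow> (AE x in lebesgue. x \<in> D \<longrightarrow> Jop J U u x = t * u x) \<Longrightarrow>
               (AE x in lebesgue. x \<in> D \<longrightarrow> u x = 0)"
    using assms unfolding in_spectrum_def by blast+
  show "surj_at t" unfolding surj_at_def
  proof (intro allI impI)
    fix f assume f: "Vsp D f"
    obtain u where u: "sq_int D u" "AE x in lebesgue. x \<in> D \<longrightarrow> Jop J U u x - t * u x = f x"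
      using A[OF Vsp_sq_int[OF f]] by blast
    define w where "w x = indicator D x * u x" for x
    have wV: "Vsp D w" unfolding w_def by (rule sq_int_Vsp[OF u(1)])
    have "AE x in lebesgue. Sop t w x = f x"
      using u(2)
    proof eventually_elim
      case (elim x)
      show ?case
      proof (cases "x \<in> D")
        case True
        then show ?thesis using elim unfolding Sop_def w_def[abs_def] T_ind Jop_eq by simp
      next
        case False
        then have "x \<notin> U" using U_sub by auto
        then show ?thesis using False Vsp_out[OF f False] unfolding Sop_def w_def T_def by simp
      qed
    qed
    then show "\<exists>w. Vsp D w \<and> (AE x in lebesgue. Sop t w x = f x)" using wV by blast
  qed
  show "inj_at t" unfolding inj_at_def
  proof (intro allI impI)
    fix w assume w: "Vsp D w" and e: "AE x in lebesgue. T w x = t * w x"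
    have "AE x in lebesgue. x \<in> D \<longrightarrow> Jop J U w x = t * w x" using e by (auto simp: Jop_eq)
    then have "AE x in lebesgue. x \<in> D \<longrightarrow> w x = 0" using B[OF Vsp_sq_int[OF w]] by blast
    then show "AE x in lebesgue. w x = 0" using Vsp_out[OF w] by auto
  qed
qed

lemma main_lemma:
  assumes zero: "in_spectrum J U D 0" and r: "r > 0" and v: "Vsp D v"
    and small: "nrm (Sop \<mu> v) < r^2 * nrm v"
  shows "\<exists>t. \<bar>t - \<mu>\<bar> < r \<and> in_spectrum J U D t"
proof (rule ccontr)
  assume "\<not> ?thesis"
  then have ns: "\<And>t. \<bar>t - \<mu>\<bar> < r \<Longrightarrow> \<not> in_spectrum J U D t" by blast
  have "r^2 * nrm v \<le> nrm (Sop \<mu> v)"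
  proof (rule core[OF r _ _ v])
    fix t assume t: "\<bar>t - \<mu>\<bar> < r"
    show "inj_at t \<and> surj_at t" using not_spec[OF ns[OF t]] by blast
    show "t \<noteq> 0" using ns[OF t] zero by blast
  qed
  then show False using small by simp
qed

lemma T_diff_est: assumes kB: "kern D J B" and u: "Vsp D u"
  shows "nrm (\<lambda>x. T u x - kern.T J B u x) \<le>
    2 * (J 0)^2 * (nrm u * measure lebesgue D + (L1 u)^2) * (measure lebesgue (U - B) + measure lebesgue (B - U))"
proof -
  interpret KB: kern D J B by (rule kB)
  define \<delta> where "\<delta> = measure lebesgue (U - B) + measure lebesgue (B - U)"
  define h :: "'a \<Rightarrow> real" where "h x = \<bar>indicator U x - indicator B x\<bar>" for x :: 'a
  have hV: "Vsp D h"
  proof (rule Vsp_bounded[of _ 1])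
    show "h \<in> borel_measurable lebesgue" unfolding h_def by measurable
    show "\<bar>h x\<bar> \<le> 1" for x unfolding h_def by (auto simp: indicator_def)
    show "x \<notin> D \<Longrightarrow> h x = 0" for x unfolding h_def using U_sub KB.U_sub by (auto simp: indicator_def)
  qed
  have nh: "nrm h = \<delta>"
  proof -
    have "nrm h = (\<integral>x. indicator (U - B) x + indicator (B - U) x \<partial>lebesgue)"
      unfolding ip_def h_def by (intro Bochner_Integration.integral_cong) (auto simp: indicator_def)
    also have "\<dots> = \<delta>" unfolding \<delta>_def
    proof (subst Bochner_Integration.integral_add)
      have "emeasure lebesgue (U - B) < \<infinity>" "emeasure lebesgue (B - U) < \<infinity>"
        using lebesgue_bounded_finite[of "U - B"] lebesgue_bounded_finite[of "B - U"] U_bdd KB.U_bdd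
        by (auto intro: bounded_subset)
      then show "integrable lebesgue (indicator (U - B) :: 'a \<Rightarrow> real)" "integrable lebesgue (indicator (B - U) :: 'a \<Rightarrow> real)"
        by auto
    qed auto
    finally show ?thesis .
  qed
  have d0: "\<delta> \<ge> 0" unfolding \<delta>_def by simp
  define a where "a = J 0 * sqrt (\<delta> * nrm u)"
  define bL where "bL = J 0 * L1 u"
  have pd: "\<bar>P u x - KB.P u x\<bar> \<le> a" for x
  proof -
    have "P u x - KB.P u x = (\<integral>y. (indicator U y - indicator B y) * (J (x - y) * u y) \<partial>lebesgue)"
      unfolding P_def KB.P_def using kern_int[OF u, of x] KB.kern_int[OF u, of x]
      by (subst Bochner_Integration.integral_diff[symmetric]) (auto simp: algebra_simps)
    also have "\<bar>\<dots>\<bar> \<le> (\<integral>y. norm ((indicator U y - indicator B y) * (J (x - y) * u y)) \<partial>lebesgue)"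
      using Bochner_Integration.integral_norm_bound[of lebesgue "\<lambda>y. (indicator U y - indicator B y) * (J (x - y) * u y)"]
      by simp
    also have "\<dots> \<le> (\<integral>y. J 0 * (h y * \<bar>u y\<bar>) \<partial>lebesgue)"
    proof (rule integral_mono)
      have "integrable lebesgue (\<lambda>y. indicator U y * (J (x - y) * u y) - indicator B y * (J (x - y) * u y))"
        using kern_int[OF u, of x] KB.kern_int[OF u, of x] by auto
      then show "integrable lebesgue (\<lambda>y. norm ((indicator U y - indicator B y) * (J (x - y) * u y)))"
        by (simp add: algebra_simps)
      show "integrable lebesgue (\<lambda>y. J 0 * (h y * \<bar>u y\<bar>))"
        using Vsp_int_mult[OF hV Vsp_abs[OF u]] by simp
      fix y
      have "\<bar>J (x - y)\<bar> \<le> J 0" using J_le[of "x - y"] J_nonneg[of "x - y"] by simp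
      then have "\<bar>J (x - y)\<bar> * (h y * \<bar>u y\<bar>) \<le> J 0 * (h y * \<bar>u y\<bar>)"
        by (rule mult_right_mono) (auto simp: h_def)
      then show "norm ((indicator U y - indicator B y) * (J (x - y) * u y)) \<le> J 0 * (h y * \<bar>u y\<bar>)"
        unfolding h_def by (simp add: abs_mult mult_ac)
    qed
    also have "\<dots> = J 0 * ip h (\<lambda>y. \<bar>u y\<bar>)" unfolding ip_def by simp
    also have "\<dots> \<le> a"
    proof -
      have "(ip h (\<lambda>y. \<bar>u y\<bar>))^2 \<le> nrm h * nrm (\<lambda>y. \<bar>u y\<bar>)" by (rule CS[OF hV Vsp_abs[OF u]])
      also have "nrm (\<lambda>y. \<bar>u y\<bar>) = nrm u" unfolding ip_def by simp
      finally have "\<bar>ip h (\<lambda>y. \<bar>u y\<bar>)\<bar>^2 \<le> \<delta> * nrm u" using nh by simp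
      then have "\<bar>ip h (\<lambda>y. \<bar>u y\<bar>)\<bar> \<le> sqrt (\<delta> * nrm u)" by (rule real_le_rsqrt)
      then show ?thesis unfolding a_def using J0_nonneg by (auto intro: mult_left_mono)
    qed
    finally show ?thesis .
  qed
  have qb: "\<bar>KB.P u x\<bar> \<le> bL" for x unfolding bL_def by (rule KB.P_bound[OF u])
  have pw: "(T u x - KB.T u x)^2 \<le> 2 * a^2 * indicator D x + 2 * bL^2 * (h x)^2" for x
  proof -
    have eq: "T u x - KB.T u x = indicator U x * (P u x - KB.P u x) + (indicator U x - indicator B x) * KB.P u x"
      unfolding T_def KB.T_def by (simp add: algebra_simps)
    have "(T u x - KB.T u x)^2 \<le> 2 * (indicator U x * (P u x - KB.P u x))^2 + 2 * ((indicator U x - indicator B x) * KB.P u x)^2"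
      unfolding eq by (rule add_sq_le)
    also have "(indicator U x * (P u x - KB.P u x))^2 \<le> a^2 * indicator D x"
    proof (cases "x \<in> U")
      case True
      then have "x \<in> D" using U_sub by auto
      have "(P u x - KB.P u x)^2 = \<bar>P u x - KB.P u x\<bar>^2" by simp
      also have "\<dots> \<le> a^2" by (rule power_mono[OF pd]) simp
      finally show ?thesis using True \<open>x \<in> D\<close> by simp
    qed simp
    also have "((indicator U x - indicator B x) * KB.P u x)^2 \<le> bL^2 * (h x)^2"
    proof -
      have "((indicator U x - indicator B x) * KB.P u x)^2 = (h x)^2 * \<bar>KB.P u x\<bar>^2"
        unfolding h_def by (simp add: power_mult_distrib)
      also have "\<dots> \<le> (h x)^2 * bL^2" by (intro mult_left_mono power_mono qb) auto
      finally show ?thesis by (simp add: mult.commute)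
    qed
    finally show ?thesis by (simp add: mult_ac)
  qed
  have "nrm (\<lambda>x. T u x - KB.T u x) = (\<integral>x. (T u x - KB.T u x)^2 \<partial>lebesgue)"
    unfolding ip_def by (simp add: power2_eq_square)
  also have "\<dots> \<le> (\<integral>x. 2 * a^2 * indicator D x + 2 * bL^2 * (h x)^2 \<partial>lebesgue)"
  proof (rule integral_mono)
    show "integrable lebesgue (\<lambda>x. (T u x - KB.T u x)\<^sup>2)"
      using Vsp_sq[OF Vsp_diff[OF T_Vsp[OF u] KB.T_Vsp[OF u]]] .
    show "integrable lebesgue (\<lambda>x. 2 * a\<^sup>2 * indicator D x + 2 * bL\<^sup>2 * (h x)\<^sup>2)"
      using int_ind Vsp_sq[OF hV] by auto
    show "(T u x - KB.T u x)\<^sup>2 \<le> 2 * a\<^sup>2 * indicator D x + 2 * bL\<^sup>2 * (h x)\<^sup>2" for x by (rule pw)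
  qed
  also have "\<dots> = 2 * a^2 * measure lebesgue D + 2 * bL^2 * \<delta>"
  proof -
    have "(\<integral>x. (h x)^2 \<partial>lebesgue) = \<delta>" using nh unfolding ip_def by (simp add: power2_eq_square)
    then show ?thesis using int_ind Vsp_sq[OF hV] by simp
  qed
  also have "\<dots> = 2 * (J 0)^2 * (nrm u * measure lebesgue D + (L1 u)^2) * \<delta>"
    unfolding a_def bL_def using d0 nrm_nonneg[of u]
    by (simp add: power_mult_distrib real_sqrt_mult algebra_simps)
  finally show ?thesis unfolding \<delta>_def .
qed

end


context kern begin

lemma unbounded_fun:
  assumes "U \<noteq> {}"
  shows "\<exists>f E. Vsp D f \<and> (\<forall>k::nat. E k \<subseteq> U) \<and> (\<forall>k. E k \<in> sets lebesgue) \<and>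
    (\<forall>k. emeasure lebesgue (E k) \<noteq> 0) \<and>
    (\<forall>k. AE x in lebesgue. x \<in> E k \<longrightarrow> sqrt (2^k) \<le> f x)"
proof -
  obtain x0 where x0: "x0 \<in> U" using assms by blast
  obtain \<rho> where \<rho>: "\<rho> > 0" "ball x0 \<rho> \<subseteq> U" by (rule openE[OF U_open x0])
  define V where "V = Henstock_Kurzweil_Integration.content (ball (0::'a) 1)"
  have V: "V > 0" unfolding V_def by (rule content_ball_pos) simp
  define s where "s k = min \<rho> (min 1 ((1/4)^k / (V + 1)))" for k :: nat
  have s: "s k > 0" "s k \<le> \<rho>" "s k \<le> 1" "s k \<le> (1/4)^k / (V + 1)" for k
  proof -
    have "(1/4::real)^k / (V + 1) > 0" using V by simp
    then show "s k > 0" unfolding s_def using \<rho> by simp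
  qed (simp_all add: s_def)
  define E where "E k = ball x0 (s k)" for k
  have EU: "E k \<subseteq> U" for k unfolding E_def using s(2)[of k] \<rho>(2) by auto
  have Em[measurable]: "E k \<in> sets lebesgue" for k unfolding E_def by (rule fmeasurableD[OF lmeasurable_ball])
  have Ecl: "emeasure lebesgue (E k) = ennreal (Henstock_Kurzweil_Integration.content (E k))" for k
    unfolding E_def using emeasure_lborel_ball_finite[of x0 "s k"]
    by (simp add: emeasure_eq_ennreal_measure)
  have Epos: "emeasure lebesgue (E k) \<noteq> 0" for k
    unfolding Ecl using content_ball_pos[OF s(1)[of k], of x0] unfolding E_def by simp
  have Esmall: "emeasure lebesgue (E k) \<le> ennreal ((1/4)^k)" for k
  proof -
    have "Henstock_Kurzweil_Integration.content (E k) = (s k)^DIM('a) * V"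
      unfolding E_def V_def by (rule content_ball_conv_unit_ball) (use s(1)[of k] in linarith)
    also have "\<dots> \<le> s k * V"
    proof (rule mult_right_mono)
      have "(s k)^DIM('a) \<le> (s k)^1"
        by (rule power_decreasing) (use s[of k] DIM_positive in \<open>auto simp: Suc_le_eq\<close>)
      then show "(s k)^DIM('a) \<le> s k" by simp
    qed (use V in simp)
    also have "\<dots> \<le> (1/4)^k / (V + 1) * V" by (rule mult_right_mono[OF s(4)]) (use V in simp)
    also have "\<dots> \<le> (1/4)^k"
    proof -
      have "V / (V + 1) \<le> 1" using V by simp
      then have "(1/4::real)^k * (V / (V + 1)) \<le> (1/4)^k * 1" by (intro mult_left_mono) auto
      moreover have "(1/4::real)^k / (V + 1) * V = (1/4)^k * (V / (V + 1))" by simp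
      ultimately show ?thesis by simp
    qed
    finally show ?thesis unfolding Ecl by (simp add: ennreal_leI)
  qed
  define F where "F x = (\<Sum>k. ennreal (2^k) * indicator (E k) x)" for x
  have Fm[measurable]: "F \<in> borel_measurable lebesgue" unfolding F_def by measurable
  have Fint: "(\<integral>\<^sup>+x. F x \<partial>lebesgue) \<le> ennreal 2"
  proof -
    have "(\<integral>\<^sup>+x. F x \<partial>lebesgue) = (\<Sum>k. \<integral>\<^sup>+x. ennreal (2^k) * indicator (E k) x \<partial>lebesgue)"
      unfolding F_def by (rule nn_integral_suminf) measurable
    also have "\<dots> = (\<Sum>k. ennreal (2^k) * emeasure lebesgue (E k))"
      by (simp add: nn_integral_cmult_indicator)
    also have "\<dots> \<le> (\<Sum>k. ennreal ((1/2)^k))"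
    proof (rule suminf_le)
      fix k :: nat
      have "ennreal (2^k) * emeasure lebesgue (E k) \<le> ennreal (2^k) * ennreal ((1/4)^k)"
        by (rule mult_left_mono[OF Esmall]) simp
      also have "\<dots> = ennreal ((1/2)^k)"
        by (simp add: ennreal_mult'[symmetric] power_mult_distrib[symmetric])
      finally show "ennreal (2^k) * emeasure lebesgue (E k) \<le> ennreal ((1/2)^k)" .
    qed auto
    also have "\<dots> = ennreal (\<Sum>k. (1/2::real)^k)"
      by (rule suminf_ennreal2) (auto intro: summable_geometric)
    also have "(\<Sum>k. (1/2::real)^k) = 2" using suminf_geometric[of "1/2::real"] by simp
    finally show ?thesis .
  qed
  have Ffin: "AE x in lebesgue. F x \<noteq> \<infinity>"
    by (rule nn_integral_PInf_AE[OF Fm]) (use Fint in \<open>auto simp: top_unique\<close>)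
  define f where "f x = sqrt (enn2real (F x))" for x
  have fV: "Vsp D f" unfolding Vsp_def
  proof (intro conjI allI impI)
    show "f \<in> borel_measurable lebesgue" unfolding f_def by measurable
    have "(\<lambda>x. (f x)^2) = (\<lambda>x. enn2real (F x))" unfolding f_def by auto
    moreover have "integrable lebesgue (\<lambda>x. enn2real (F x))"
      unfolding integrable_iff_bounded
    proof
      show "(\<lambda>x. enn2real (F x)) \<in> borel_measurable lebesgue" by measurable
      have "(\<integral>\<^sup>+x. ennreal (norm (enn2real (F x))) \<partial>lebesgue) \<le> (\<integral>\<^sup>+x. F x \<partial>lebesgue)"
      proof (rule nn_integral_mono)
        fix x show "ennreal (norm (enn2real (F x))) \<le> F x"
          by (cases "F x = \<infinity>") (auto simp: less_top)
      qed
      also have "\<dots> < \<infinity>" using Fint by (simp add: le_less_trans)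
      finally show "(\<integral>\<^sup>+x. ennreal (norm (enn2real (F x))) \<partial>lebesgue) < \<infinity>" .
    qed
    ultimately show "integrable lebesgue (\<lambda>x. (f x)^2)" by simp
    fix x assume "x \<notin> D"
    then have "x \<notin> E k" for k using EU U_sub by blast
    then have "F x = 0" unfolding F_def by simp
    then show "f x = 0" unfolding f_def by simp
  qed
  have flow: "AE x in lebesgue. x \<in> E k \<longrightarrow> sqrt (2^k) \<le> f x" for k
    using Ffin
  proof eventually_elim
    case (elim x)
    show ?case
    proof
      assume xE: "x \<in> E k"
      have "sum (\<lambda>j. ennreal (2^j) * indicator (E j) x) {k} \<le> F x"
        unfolding F_def by (rule sum_le_suminf) auto
      then have "ennreal (2^k) \<le> F x" using xE by simp
      then have "enn2real (ennreal (2^k)) \<le> enn2real (F x)"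
        by (rule enn2real_mono) (use elim in \<open>simp add: less_top\<close>)
      then have "2^k \<le> enn2real (F x)" by simp
      then show "sqrt (2^k) \<le> f x" unfolding f_def by simp
    qed
  qed
  show ?thesis using fV EU Em Epos flow by blast
qed

lemma zero_spec: assumes v: "Vsp D v" "nrm v > 0" shows "in_spectrum J U D 0"
proof (cases "U = {}")
  case True
  have "\<not> (\<forall>u. sq_int D u \<and> (AE x in lebesgue. x \<in> D \<longrightarrow> Jop J U u x = 0 * u x) \<longrightarrow>
        (AE x in lebesgue. x \<in> D \<longrightarrow> u x = 0))"
  proof
    assume B: "\<forall>u. sq_int D u \<and> (AE x in lebesgue. x \<in> D \<longrightarrow> Jop J U u x = 0 * u x) \<longrightarrow>
        (AE x in lebesgue. x \<in> D \<longrightarrow> u x = 0)"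
    have "Jop J U v x = 0 * v x" for x unfolding Jop_eq T_def using True by simp
    then have "AE x in lebesgue. x \<in> D \<longrightarrow> v x = 0" using B Vsp_sq_int[OF v(1)] by simp
    then have "AE x in lebesgue. v x = 0" using Vsp_out[OF v(1)] by auto
    then have "nrm v = 0" using nrm_eq_0[OF v(1)] by simp
    then show False using v(2) by simp
  qed
  then show ?thesis unfolding in_spectrum_def by blast
next
  case False
  obtain f E where fV: "Vsp D f" and EU: "\<And>k::nat. E k \<subseteq> U" and Em: "\<And>k. E k \<in> sets lebesgue"
    and Epos: "\<And>k. emeasure lebesgue (E k) \<noteq> 0"
    and flow: "\<And>k. AE x in lebesgue. x \<in> E k \<longrightarrow> sqrt (2^k) \<le> f x"
    using unbounded_fun[OF False] by blast
  have "\<not> (\<forall>f. sq_int D f \<longrightarrow>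
        (\<exists>u. sq_int D u \<and> (AE x in lebesgue. x \<in> D \<longrightarrow> Jop J U u x - 0 * u x = f x)))"
  proof
    assume A: "\<forall>f. sq_int D f \<longrightarrow>
        (\<exists>u. sq_int D u \<and> (AE x in lebesgue. x \<in> D \<longrightarrow> Jop J U u x - 0 * u x = f x))"
    then obtain u where u: "sq_int D u" "AE x in lebesgue. x \<in> D \<longrightarrow> Jop J U u x - 0 * u x = f x"
      using Vsp_sq_int[OF fV] by blast
    define ub where "ub x = indicator D x * u x" for x
    have ubV: "Vsp D ub" unfolding ub_def by (rule sq_int_Vsp[OF u(1)])
    define M where "M = J 0 * L1 ub"
    have M: "M \<ge> 0" unfolding M_def using J0_nonneg L1_nonneg by simp
    have Tb: "\<bar>Jop J U u x\<bar> \<le> M" for x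
      using T_bound[OF ubV, of x] unfolding M_def Jop_eq ub_def[abs_def] T_ind .
    obtain k :: nat where k: "M^2 < 2^k" using real_arch_pow[of 2 "M^2"] by auto
    have "AE x in lebesgue. x \<notin> E k"
      using u(2) flow[of k]
    proof eventually_elim
      case (elim x)
      show ?case
      proof
        assume xE: "x \<in> E k"
        then have "x \<in> D" using EU U_sub by blast
        then have "f x = Jop J U u x" using elim by simp
        then have "f x \<le> M" using Tb[of x] by simp
        moreover have "sqrt (2^k) \<le> f x" using elim xE by simp
        moreover have "M < sqrt (2^k)"
        proof -
          have "sqrt (M^2) < sqrt (2^k)" by (rule real_sqrt_less_mono[OF k])
          then show ?thesis using M by simp
        qed
        ultimately show False by simp
      qed
    qed
    moreover have "(AE x in lebesgue. x \<notin> E k) \<longleftrightarrow> emeasure lebesgue (E k) = 0"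
      by (rule AE_iff_measurable[OF Em[of k]]) auto
    ultimately have "emeasure lebesgue (E k) = 0" by simp
    then show False using Epos by blast
  qed
  then show ?thesis unfolding in_spectrum_def by blast
qed

end


lemma mk_kern:
  fixes J :: "'a::euclidean_space \<Rightarrow> real"
  assumes "bounded D" "D \<in> sets lebesgue" "continuous_on UNIV J" "\<And>x. 0 \<le> J x" "\<And>x. J x \<le> J 0"
    "\<And>x. J (- x) = J x" "open U" "U \<subseteq> D"
  shows "kern D J U"
  unfolding kern_def kern_axioms_def dom_def using assms by auto

theorem lemma3p6:
  fixes J :: "'a::euclidean_space \<Rightarrow> real"
    and D \<Omega> :: "'a set" and \<Omega>n :: "nat \<Rightarrow> 'a set" and \<mu> :: real
  assumes J_cont: "continuous_on UNIV J"
    and J_nonneg: "\<And>x. J x \<ge> 0"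
    and J_sym: "\<And>x y. norm x = norm y \<Longrightarrow> J x = J y"
    and J_decr: "\<And>x y. norm x \<le> norm y \<Longrightarrow> J y \<le> J x"
    and J0: "J 0 > 0"
    and J_int: "integrable lebesgue J" "integral\<^sup>L lebesgue J = 1"
    and D: "bounded D" "D \<in> sets lebesgue"
    and Om: "open \<Omega>" "bounded \<Omega>" "\<Omega> \<subseteq> D"
    and Omn: "\<And>n. open (\<Omega>n n)" "\<And>n. bounded (\<Omega>n n)" "\<And>n. \<Omega>n n \<subseteq> D"
    and conv: "(\<lambda>n. measure lebesgue (\<Omega> - \<Omega>n n) + measure lebesgue (\<Omega>n n - \<Omega>)) \<longlonglongrightarrow> 0"
    and eig: "is_eigenvalue J \<Omega> D \<mu>"
  shows "\<exists>\<mu>n :: nat \<Rightarrow> real. (\<forall>n. in_spectrum J (\<Omega>n n) D (\<mu>n n)) \<and> \<mu>n \<longlonglongrightarrow> \<mu>"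
proof -
  have Jle: "J x \<le> J 0" for x using J_decr[of 0 x] by simp
  have Jsym: "J (- x) = J x" for x using J_sym[of "- x" x] by simp
  interpret dom D using D by (simp add: dom_def)
  have kO: "kern D J \<Omega>" by (rule mk_kern) (use D J_cont J_nonneg Jle Jsym Om in auto)
  have kn: "kern D J (\<Omega>n n)" for n by (rule mk_kern) (use D J_cont J_nonneg Jle Jsym Omn in auto)
  interpret KO: kern D J \<Omega> by (rule kO)
  obtain u where u: "sq_int D u" "\<not> (AE x in lebesgue. x \<in> D \<longrightarrow> u x = 0)"
    "AE x in lebesgue. x \<in> D \<longrightarrow> Jop J \<Omega> u x = \<mu> * u x"
    using eig unfolding is_eigenvalue_def by blast
  define ub where "ub x = indicator D x * u x" for x
  have ubV: "Vsp D ub" unfolding ub_def by (rule sq_int_Vsp[OF u(1)])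
  have npos: "nrm ub > 0"
  proof (rule ccontr)
    assume "\<not> nrm ub > 0"
    then have "nrm ub = 0" using nrm_nonneg[of ub] by linarith
    then have "AE x in lebesgue. ub x = 0" using nrm_eq_0[OF ubV] by simp
    then have "AE x in lebesgue. x \<in> D \<longrightarrow> u x = 0" by eventually_elim (simp add: ub_def indicator_def)
    then show False using u(2) by blast
  qed
  have Teig: "AE x in lebesgue. KO.T ub x = \<mu> * ub x"
    using u(3)
  proof eventually_elim
    case (elim x)
    show ?case
    proof (cases "x \<in> D")
      case True
      then show ?thesis using elim unfolding ub_def[abs_def] KO.T_ind KO.Jop_eq by simp
    next
      case False
      then show ?thesis using Vsp_out[OF KO.T_Vsp[OF ubV] False] Vsp_out[OF ubV False] by simp
    qed
  qed
  define K where "K = 2 * (J 0)^2 * (nrm ub * measure lebesgue D + (L1 ub)^2)"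
  define e where "e n = nrm (kern.Sop J (\<Omega>n n) \<mu> ub)" for n
  have e_bound: "e n \<le> K * (measure lebesgue (\<Omega> - \<Omega>n n) + measure lebesgue (\<Omega>n n - \<Omega>))" for n
  proof -
    interpret KN: kern D J "\<Omega>n n" by (rule kn)
    have "e n = nrm (\<lambda>x. KN.T ub x - KO.T ub x)"
      unfolding e_def
    proof (rule nrm_cong[OF _ KN.Sop_Vsp[OF ubV] Vsp_diff[OF KN.T_Vsp[OF ubV] KO.T_Vsp[OF ubV]]])
      show "AE x in lebesgue. KN.Sop \<mu> ub x = KN.T ub x - KO.T ub x"
        using Teig by eventually_elim (simp add: KN.Sop_def)
    qed
    also have "\<dots> \<le> K * (measure lebesgue (\<Omega>n n - \<Omega>) + measure lebesgue (\<Omega> - \<Omega>n n))"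
      unfolding K_def by (rule KN.T_diff_est[OF kO ubV])
    finally show ?thesis by (simp add: add.commute)
  qed
  have e_nonneg: "e n \<ge> 0" for n unfolding e_def by (rule nrm_nonneg)
  have e_lim: "e \<longlonglongrightarrow> 0"
  proof (rule Lim_null_comparison[where g = "\<lambda>n. K * (measure lebesgue (\<Omega> - \<Omega>n n) + measure lebesgue (\<Omega>n n - \<Omega>))"])
    show "\<forall>\<^sub>F n in sequentially. norm (e n) \<le> K * (measure lebesgue (\<Omega> - \<Omega>n n) + measure lebesgue (\<Omega>n n - \<Omega>))"
      using e_bound e_nonneg by (intro always_eventually) simp
    show "(\<lambda>n. K * (measure lebesgue (\<Omega> - \<Omega>n n) + measure lebesgue (\<Omega>n n - \<Omega>))) \<longlonglongrightarrow> 0"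
      using tendsto_mult_right_zero[OF conv, of K] by simp
  qed
  define \<nu> where "\<nu> = nrm ub"
  define r where "r n = sqrt (e n / \<nu>) + 1 / real (Suc n)" for n
  have r_pos: "r n > 0" for n
  proof -
    have "sqrt (e n / \<nu>) \<ge> 0" using e_nonneg[of n] npos \<nu>_def by simp
    moreover have "1 / real (Suc n) > 0" by simp
    ultimately show ?thesis unfolding r_def by linarith
  qed
  have r_small: "e n < (r n)^2 * \<nu>" for n
  proof -
    have en: "0 \<le> e n / \<nu>" using e_nonneg[of n] npos \<nu>_def by simp
    have s0: "sqrt (e n / \<nu>) \<ge> 0" using en by simp
    have "sqrt (e n / \<nu>) < r n" unfolding r_def by simp
    then have "(sqrt (e n / \<nu>))^2 < (r n)^2" using s0 by (intro power_strict_mono) auto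
    then have "e n / \<nu> < (r n)^2" using en by simp
    then show ?thesis using npos \<nu>_def by (simp add: divide_less_eq)
  qed
  have ex: "\<exists>t. \<bar>t - \<mu>\<bar> < r n \<and> in_spectrum J (\<Omega>n n) D t" for n
  proof -
    interpret KN: kern D J "\<Omega>n n" by (rule kn)
    show ?thesis
    proof (rule KN.main_lemma[OF KN.zero_spec[OF ubV npos] r_pos ubV])
      show "nrm (KN.Sop \<mu> ub) < (r n)^2 * nrm ub" using r_small[of n] unfolding e_def \<nu>_def .
    qed
  qed
  then obtain \<mu>n where \<mu>n: "\<And>n. \<bar>\<mu>n n - \<mu>\<bar> < r n" "\<And>n. in_spectrum J (\<Omega>n n) D (\<mu>n n)" by metis
  have r_lim: "r \<longlonglongrightarrow> 0"
  proof -
    have nu0: "\<nu> \<noteq> 0" using npos \<nu>_def by simp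
    have "(\<lambda>n. e n / \<nu>) \<longlonglongrightarrow> 0 / \<nu>" by (intro tendsto_intros e_lim nu0)
    then have "(\<lambda>n. sqrt (e n / \<nu>)) \<longlonglongrightarrow> sqrt 0" by (intro tendsto_intros) simp
    moreover have "(\<lambda>n. 1 / real (Suc n)) \<longlonglongrightarrow> 0" by (rule LIMSEQ_Suc[OF lim_inverse_n'])
    ultimately have "(\<lambda>n. sqrt (e n / \<nu>) + 1 / real (Suc n)) \<longlonglongrightarrow> 0 + 0" by (intro tendsto_intros) simp_all
    then show ?thesis unfolding r_def[abs_def] by simp
  qed
  have "(\<lambda>n. \<mu>n n - \<mu>) \<longlonglongrightarrow> 0"
  proof (rule Lim_null_comparison[where g = r])
    show "\<forall>\<^sub>F n in sequentially. norm (\<mu>n n - \<mu>) \<le> r n"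
      using \<mu>n(1) by (intro always_eventually) (simp add: less_imp_le)
  qed (rule r_lim)
  then have "\<mu>n \<longlonglongrightarrow> \<mu>" using LIM_zero_iff by blast
  then show ?thesis using \<mu>n(2) by blast
qed


end
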